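(* (FCN) Let $\bm{W}^\star\in\mathbb{R}^{d\times K}$ with $\|\bm{w}_k^\star\|_2\le1$ for all $k$. There is a constant $C_1$ such that for all $\bm{W}\in\mathbb{R}^{d\times K}$ with $\|\bm{W}-\bm{W}^\star\|_{\mathrm F}\le0.7$, $$\|\nabla^2f(\bm{W})-\nabla^2f(\bm{W}^\star)\|\le\frac{C_1}{K^{3/2}}\|\bm{W}-\bm{W}^\star\|_{\mathrm F}.$$ (CNN) Let $\bm{w}^\star\in\mathbb{R}^m$ with $\|\bm{w}^\star\|_2\le1$. There is a constant $C_2$ such that for all $\bm{w}$ with $\|\bm{w}-\bm{w}^\star\|_2\le0.7$, $$\|\nabla^2f(\bm{w})-\nabla^2f(\bm{w}^\star)\|\le C_2K\|\bm{w}-\bm{w}^\star\|_2.$$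
   Context: $\phi(x)=1/(1+e^{-x})$. FCN: $H(\bm{W},\bm{x})=\frac1K\sum_{k=1}^K\phi(\bm{w}_k^\top\bm{x})$ for $\bm{W}=[\bm{w}_1,\dots,\bm{w}_K]$. CNN: $d=mK$, $\bm{x}^{(k)}=(x_{m(k-1)+1},\dots,x_{mk})^\top$, $H(\bm{w},\bm{x})=\frac1K\sum_k\phi(\bm{w}^\top\bm{x}^{(k)})$. $(\bm{x},y)$: $\bm{x}\sim\mathcal{N}(\bm{0},\bm{I}_d)$, $y\in\{0,1\}$, $\mathbb{P}(y=1\mid\bm{x})=H(\bm{W}^\star,\bm{x})$ (resp. $H(\bm{w}^\star,\bm{x})$). Loss $\ell(\bm{W};\bm{x},y)=-y\log H(\bm{W},\bm{x})-(1-y)\log(1-H(\bm{W},\bm{x}))$; population risk $f(\bm{W})=\mathbb{E}[\ell(\bm{W};\bm{x},y)]$; Hessians are with respect to $\mathrm{vec}(\bm{W})\in\mathbb{R}^{dK}$ (resp. $\bm{w}$); $\|\cdot\|$ is the spectral norm. *)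

theory Defs
  imports "HOL-Probability.Probability"
begin

definition sigmoid :: "real \<Rightarrow> real" where
  "sigmoid t = 1 / (1 + exp (- t))"

definition gauss :: "nat \<Rightarrow> (nat \<Rightarrow> real) measure" where
  "gauss d = PiM {..<d} (\<lambda>_. density lborel std_normal_density)"

definition xent_loss :: "real \<Rightarrow> real \<Rightarrow> real" where
  "xent_loss h y = - y * ln h - (1 - y) * ln (1 - h)"

text \<open>Population risk: x ~ gauss d, y in {0,1} with P(y=1|x) = Hstar x.\<close>
definition pop_risk :: "nat \<Rightarrow> ((nat \<Rightarrow> real) \<Rightarrow> real) \<Rightarrow> ((nat \<Rightarrow> real) \<Rightarrow> real) \<Rightarrow> real" where
  "pop_risk d Hstar H = (\<integral>x. (Hstar x * xent_loss (H x) 1 + (1 - Hstar x) * xent_loss (H x) 0) \<partial>gauss d)"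

text \<open>FCN: W (i,k) is the i-th entry of w_k (i < d, k < K).\<close>
definition fcn_H :: "nat \<Rightarrow> nat \<Rightarrow> (nat \<times> nat \<Rightarrow> real) \<Rightarrow> (nat \<Rightarrow> real) \<Rightarrow> real" where
  "fcn_H d K W x = (1 / real K) * (\<Sum>k<K. sigmoid (\<Sum>i<d. W (i, k) * x i))"

definition fcn_risk :: "nat \<Rightarrow> nat \<Rightarrow> (nat \<times> nat \<Rightarrow> real) \<Rightarrow> (nat \<times> nat \<Rightarrow> real) \<Rightarrow> real" where
  "fcn_risk d K Wstar W = pop_risk d (fcn_H d K Wstar) (fcn_H d K W)"

text \<open>CNN: d = m*K, x^(k)_j = x (m*k + j) for j < m, k < K (0-indexed).\<close>
definition cnn_H :: "nat \<Rightarrow> nat \<Rightarrow> (nat \<Rightarrow> real) \<Rightarrow> (nat \<Rightarrow> real) \<Rightarrow> real" where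
  "cnn_H m K w x = (1 / real K) * (\<Sum>k<K. sigmoid (\<Sum>j<m. w j * x (m * k + j)))"

definition cnn_risk :: "nat \<Rightarrow> nat \<Rightarrow> (nat \<Rightarrow> real) \<Rightarrow> (nat \<Rightarrow> real) \<Rightarrow> real" where
  "cnn_risk m K wstar w = pop_risk (m * K) (cnn_H m K wstar) (cnn_H m K w)"

definition coord :: "'a \<Rightarrow> 'a \<Rightarrow> real" where
  "coord p = (\<lambda>q. if q = p then 1 else 0)"

definition hessian :: "(('a \<Rightarrow> real) \<Rightarrow> real) \<Rightarrow> ('a \<Rightarrow> real) \<Rightarrow> 'a \<Rightarrow> 'a \<Rightarrow> real" where
  "hessian f W p q =
     deriv (\<lambda>s. deriv (\<lambda>t. f (\<lambda>r. W r + s * coord q r + t * coord p r)) 0) 0"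

definition spec_norm :: "'a set \<Rightarrow> ('a \<Rightarrow> 'a \<Rightarrow> real) \<Rightarrow> real" where
  "spec_norm I A = Sup {sqrt (\<Sum>p\<in>I. (\<Sum>q\<in>I. A p q * v q)\<^sup>2) | v. (\<Sum>q\<in>I. (v q)\<^sup>2) = 1}"

end

theory Submission
  imports Defs
begin


definition lf :: "nat \<Rightarrow> (nat \<Rightarrow> real) \<Rightarrow> (nat \<Rightarrow> real) \<Rightarrow> real" where
  "lf d c x = (\<Sum>i<d. c i * x i)"

definition nrm2 :: "nat \<Rightarrow> (nat \<Rightarrow> real) \<Rightarrow> real" where
  "nrm2 d c = (\<Sum>i<d. (c i)\<^sup>2)"

abbreviation "NN \<equiv> density lborel std_normal_density"

lemma prob_NN: "prob_space NN"
  using prob_space_normal_density by auto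

lemma prob_gauss: "prob_space (gauss d)"
  unfolding gauss_def by (intro prob_space_PiM prob_NN)

lemma sets_gauss: "sets (gauss d) = sets (PiM {..<d} (\<lambda>_. borel))"
  unfolding gauss_def by (intro sets_PiM_cong) auto

lemma lf_meas[measurable]: "lf d c \<in> borel_measurable (gauss d)"
  unfolding lf_def
  by (subst measurable_cong_sets[OF sets_gauss refl]) measurable

lemma mgf1: "integrable NN (\<lambda>t. exp (c * t)) \<and> (\<integral>t. exp (c * t) \<partial>NN) = exp (c\<^sup>2 / 2)"
proof -
  have eq: "\<And>t. std_normal_density t * exp (c * t) = exp (c\<^sup>2/2) * normal_density c 1 t"
    by (simp add: normal_density_def exp_add[symmetric] power2_eq_square field_simps)
  have i: "integrable lborel (\<lambda>t. std_normal_density t * exp (c * t))"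
    unfolding eq by simp
  have "integrable NN (\<lambda>t. exp (c * t))"
    by (subst integrable_density) (use i in auto)
  moreover have "(\<integral>t. exp (c * t) \<partial>NN) = (\<integral>t. std_normal_density t * exp (c * t) \<partial>lborel)"
    by (subst integral_density) auto
  moreover have "\<dots> = exp (c\<^sup>2 / 2)" unfolding eq by simp
  ultimately show ?thesis by simp
qed

lemma mgf: "integrable (gauss d) (\<lambda>x. exp (lf d c x)) \<and> (\<integral>x. exp (lf d c x) \<partial>gauss d) = exp (nrm2 d c / 2)"
proof -
  interpret product_sigma_finite "\<lambda>_::nat. NN"
    unfolding product_sigma_finite_def using prob_NN
    by (simp add: prob_space_imp_sigma_finite)
  have e: "\<And>x. exp (lf d c x) = (\<Prod>i\<in>{..<d}. exp (c i * x i))"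
    unfolding lf_def by (simp add: exp_sum)
  have "integrable (gauss d) (\<lambda>x. (\<Prod>i\<in>{..<d}. exp (c i * x i)))"
    unfolding gauss_def by (rule product_integrable_prod) (use mgf1 in auto)
  moreover have "(\<integral>x. (\<Prod>i\<in>{..<d}. exp (c i * x i)) \<partial>gauss d) = (\<Prod>i\<in>{..<d}. exp ((c i)\<^sup>2/2))"
    unfolding gauss_def by (subst product_integral_prod) (use mgf1 in auto)
  moreover have "(\<Prod>i\<in>{..<d}. exp ((c i)\<^sup>2/2)) = exp (nrm2 d c / 2)"
    unfolding nrm2_def by (simp add: exp_sum[symmetric] sum_divide_distrib)
  ultimately show ?thesis unfolding e by simp
qed


lemma mvt_abs:
  fixes f f' :: "real \<Rightarrow> real"
  assumes "\<And>s. \<bar>s\<bar> \<le> \<bar>t\<bar> \<Longrightarrow> (f has_real_derivative f' s) (at s)"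
    and "\<And>s. \<bar>s\<bar> \<le> \<bar>t\<bar> \<Longrightarrow> \<bar>f' s\<bar> \<le> B"
  shows "\<bar>f t - f 0\<bar> \<le> B * \<bar>t\<bar>"
proof (cases "t = 0")
  case True then show ?thesis by simp
next
  case False
  show ?thesis
  proof (cases "t > 0")
    case True
    have "\<And>x. 0 \<le> x \<Longrightarrow> x \<le> t \<Longrightarrow> (f has_real_derivative f' x) (at x)"
      using assms(1) True by auto
    from MVT2[OF True this] obtain z where z: "0 < z" "z < t" "f t - f 0 = (t - 0) * f' z"
      by blast
    have b: "\<bar>f' z\<bar> \<le> B" using assms(2)[of z] z by auto
    have "\<bar>f t - f 0\<bar> = \<bar>t\<bar> * \<bar>f' z\<bar>" using z by (simp add: abs_mult)
    also have "\<dots> \<le> \<bar>t\<bar> * B" using b by (intro mult_left_mono) auto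
    finally show ?thesis by (simp add: mult_ac)
  next
    case f: False
    with False have tn: "t < 0" by simp
    have "\<And>x. t \<le> x \<Longrightarrow> x \<le> 0 \<Longrightarrow> (f has_real_derivative f' x) (at x)"
      using assms(1) tn by auto
    from MVT2[OF tn this] obtain z where z: "t < z" "z < 0" "f 0 - f t = (0 - t) * f' z"
      by blast
    have b: "\<bar>f' z\<bar> \<le> B" using assms(2)[of z] z by auto
    have "\<bar>f t - f 0\<bar> = \<bar>t\<bar> * \<bar>f' z\<bar>" using z by (simp add: abs_mult abs_minus_commute)
    also have "\<dots> \<le> \<bar>t\<bar> * B" using b by (intro mult_left_mono) auto
    finally show ?thesis by (simp add: mult_ac)
  qed
qed

lemma leibniz:
  fixes F F' :: "real \<Rightarrow> 'a \<Rightarrow> real"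
  assumes int: "\<And>t. \<bar>t\<bar> < 1 \<Longrightarrow> integrable M (F t)"
  and meas: "F' 0 \<in> borel_measurable M"
  and G: "integrable M G"
  and der: "\<And>t x. \<bar>t\<bar> < 1 \<Longrightarrow> x \<in> space M \<Longrightarrow> ((\<lambda>t. F t x) has_real_derivative F' t x) (at t)"
  and bnd: "\<And>t x. \<bar>t\<bar> < 1 \<Longrightarrow> x \<in> space M \<Longrightarrow> \<bar>F' t x\<bar> \<le> G x"
  shows "((\<lambda>t. \<integral>x. F t x \<partial>M) has_real_derivative (\<integral>x. F' 0 x \<partial>M)) (at 0)"
  unfolding has_field_derivative_iff tendsto_at_iff_sequentially
proof (intro allI impI)
  fix X :: "nat \<Rightarrow> real" assume X: "\<forall>i. X i \<in> UNIV - {0}" "X \<longlonglongrightarrow> 0"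
  then obtain N where N: "\<And>n. n \<ge> N \<Longrightarrow> \<bar>X n\<bar> < 1"
    using LIMSEQ_D[of X 0 1] by auto
  have eq: "((\<lambda>y. ((\<integral>x. F y x \<partial>M) - (\<integral>x. F 0 x \<partial>M)) / (y - 0)) \<circ> X) (n + N) =
      (\<integral>x. (F (X (n+N)) x - F 0 x) / X (n+N) \<partial>M)" for n
    using int[of "X (n+N)"] int[of 0] N[of "n+N"] by simp
  show "((\<lambda>y. ((\<integral>x. F y x \<partial>M) - (\<integral>x. F 0 x \<partial>M)) / (y - 0)) \<circ> X) \<longlonglongrightarrow> (\<integral>x. F' 0 x \<partial>M)"
  proof (rule LIMSEQ_offset[where k=N], unfold eq, rule integral_dominated_convergence[where w=G])
    show "F' 0 \<in> borel_measurable M" by fact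
    show "integrable M G" by fact
    show "(\<lambda>x. (F (X (n+N)) x - F 0 x) / X (n+N)) \<in> borel_measurable M" for n
      using int[of "X (n+N)"] int[of 0] N[of "n+N"] by auto
    show "AE x in M. (\<lambda>n. (F (X (n+N)) x - F 0 x) / X (n+N)) \<longlonglongrightarrow> F' 0 x"
    proof (rule AE_I2)
      fix x assume x: "x \<in> space M"
      have "((\<lambda>y. (F y x - F 0 x) / (y - 0)) \<longlongrightarrow> F' 0 x) (at 0)"
        using der[of 0 x] x unfolding has_field_derivative_iff by simp
      then have "((\<lambda>y. (F y x - F 0 x) / (y - 0)) \<circ> (\<lambda>n. X (n+N))) \<longlonglongrightarrow> F' 0 x"
        unfolding tendsto_at_iff_sequentially using X LIMSEQ_ignore_initial_segment[OF X(2), of N]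
        by auto
      then show "(\<lambda>n. (F (X (n+N)) x - F 0 x) / X (n+N)) \<longlonglongrightarrow> F' 0 x" by (simp add: comp_def)
    qed
    show "AE x in M. norm ((F (X (n+N)) x - F 0 x) / X (n+N)) \<le> G x" for n
    proof (rule AE_I2)
      fix x assume x: "x \<in> space M"
      have t1: "\<bar>X (n+N)\<bar> < 1" using N by simp
      have "\<bar>F (X (n+N)) x - F 0 x\<bar> \<le> G x * \<bar>X (n+N)\<bar>"
        by (rule mvt_abs[where f'="\<lambda>s. F' s x"]) (use t1 x der bnd in auto)
      moreover have "X (n+N) \<noteq> 0" using X by auto
      ultimately show "norm ((F (X (n+N)) x - F 0 x) / X (n+N)) \<le> G x"
        by (simp add: divide_le_eq abs_divide)
    qed
  qed
qed


lemma lf_scale: "lf d (\<lambda>i. a * c i) x = a * lf d c x"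
  unfolding lf_def by (simp add: sum_distrib_left mult_ac)

lemma nrm2_scale: "nrm2 d (\<lambda>i. a * c i) = a\<^sup>2 * nrm2 d c"
  unfolding nrm2_def by (simp add: sum_distrib_left power_mult_distrib)

lemma nrm2_nonneg[simp]: "0 \<le> nrm2 d c"
  unfolding nrm2_def by (simp add: sum_nonneg)

lemma nrm2_neg: "nrm2 d (\<lambda>i. - (a * c i)) = a\<^sup>2 * nrm2 d c"
  unfolding nrm2_def by (simp add: sum_distrib_left power_mult_distrib)

lemma lf_zero: assumes "nrm2 d c = 0" shows "lf d c x = 0"
proof -
  have "\<forall>i\<in>{..<d}. (c i)\<^sup>2 = 0"
    using assms unfolding nrm2_def by (subst sum_nonneg_eq_0_iff[symmetric]) auto
  then show ?thesis unfolding lf_def by auto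
qed

lemma expabs:
  assumes "0 \<le> \<beta>"
  shows "integrable (gauss d) (\<lambda>x. exp (\<beta> * \<bar>lf d c x\<bar>)) \<and>
         (\<integral>x. exp (\<beta> * \<bar>lf d c x\<bar>) \<partial>gauss d) \<le> 2 * exp (\<beta>\<^sup>2 * nrm2 d c / 2)"
proof -
  let ?f = "\<lambda>x. exp (lf d (\<lambda>i. \<beta> * c i) x) + exp (lf d (\<lambda>i. (-\<beta>) * c i) x)"
  have i: "integrable (gauss d) ?f" using mgf by auto
  have v: "(\<integral>x. ?f x \<partial>gauss d) = 2 * exp (\<beta>\<^sup>2 * nrm2 d c / 2)"
    using mgf[of d "\<lambda>i. \<beta> * c i"] mgf[of d "\<lambda>i. (-\<beta>) * c i"]
    by (simp add: nrm2_scale nrm2_neg)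
  have pw: "exp (\<beta> * \<bar>lf d c x\<bar>) \<le> ?f x" for x
    unfolding lf_scale by (cases "lf d c x \<ge> 0") (auto simp: add_increasing add_increasing2)
  have ii: "integrable (gauss d) (\<lambda>x. exp (\<beta> * \<bar>lf d c x\<bar>))"
    by (rule Bochner_Integration.integrable_bound[OF i]) (use pw in \<open>auto intro!: AE_I2 order_trans[OF _ pw]\<close>)
  have "(\<integral>x. exp (\<beta> * \<bar>lf d c x\<bar>) \<partial>gauss d) \<le> (\<integral>x. ?f x \<partial>gauss d)"
    by (rule Bochner_Integration.integral_mono[OF ii i pw])
  with ii v show ?thesis by simp
qed

lemma pow_le_exp: fixes s :: real assumes "0 \<le> s" shows "s ^ n \<le> fact n * exp s"
proof -
  have "(\<lambda>m. s^m /\<^sub>R fact m) sums exp s" by (rule exp_converges)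
  then have sm: "summable (\<lambda>m. s^m / fact m)" and e: "exp s = (\<Sum>m. s^m / fact m)"
    by (auto simp: sums_iff divide_inverse_commute)
  have "sum (\<lambda>m. s^m / fact m) {n} \<le> (\<Sum>m. s^m / fact m)"
    by (rule sum_le_suminf[OF sm]) (use assms in auto)
  then have "s^n / fact n \<le> exp s" using e by simp
  then show ?thesis by (simp add: divide_le_eq mult.commute)
qed

lemma powabs:
  shows "integrable (gauss d) (\<lambda>x. \<bar>lf d c x\<bar> ^ n) \<and>
         (\<integral>x. \<bar>lf d c x\<bar> ^ n \<partial>gauss d) \<le> fact n * (2 * exp (nrm2 d c / 2))"
proof -
  have e: "integrable (gauss d) (\<lambda>x. exp (1 * \<bar>lf d c x\<bar>)) \<and>
         (\<integral>x. exp (1 * \<bar>lf d c x\<bar>) \<partial>gauss d) \<le> 2 * exp (1\<^sup>2 * nrm2 d c / 2)"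
    by (rule expabs) simp
  have i: "integrable (gauss d) (\<lambda>x. fact n * exp (\<bar>lf d c x\<bar>))" using e by simp
  have pw: "\<bar>lf d c x\<bar> ^ n \<le> fact n * exp (\<bar>lf d c x\<bar>)" for x
    by (rule pow_le_exp) simp
  have ii: "integrable (gauss d) (\<lambda>x. \<bar>lf d c x\<bar> ^ n)"
    by (rule Bochner_Integration.integrable_bound[OF i]) (use pw in \<open>auto intro!: AE_I2 order_trans[OF _ pw]\<close>)
  have "(\<integral>x. \<bar>lf d c x\<bar> ^ n \<partial>gauss d) \<le> (\<integral>x. fact n * exp (\<bar>lf d c x\<bar>) \<partial>gauss d)"
    by (rule Bochner_Integration.integral_mono[OF ii i pw])
  also have "\<dots> = fact n * (\<integral>x. exp (\<bar>lf d c x\<bar>) \<partial>gauss d)" by simp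
  also have "\<dots> \<le> fact n * (2 * exp (nrm2 d c / 2))"
    using e by (intro mult_left_mono) auto
  finally show ?thesis using ii by simp
qed

definition nz :: "nat \<Rightarrow> (nat \<Rightarrow> real) \<Rightarrow> (nat \<Rightarrow> real)" where
  "nz d c = (\<lambda>i. (if nrm2 d c = 0 then 0 else 1 / sqrt (nrm2 d c)) * c i)"

lemma nz_nrm2: "nrm2 d (nz d c) \<le> 1"
proof -
  have "nrm2 d c \<noteq> 0 \<Longrightarrow> 0 < nrm2 d c" by (metis nrm2_nonneg order_le_neq_trans)
  then show ?thesis unfolding nz_def nrm2_scale by (auto simp: power_divide)
qed

lemma nz_lf: "\<bar>lf d c x\<bar> = sqrt (nrm2 d c) * \<bar>lf d (nz d c) x\<bar>"
proof (cases "nrm2 d c = 0")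
  case True then show ?thesis by (simp add: lf_zero)
next
  case False
  then have "nrm2 d c > 0" by (metis nrm2_nonneg order_le_neq_trans)
  then have "sqrt (nrm2 d c) > 0" by simp
  then show ?thesis unfolding nz_def lf_scale using False by (simp add: abs_mult)
qed

lemma prod_le_max_pow:
  fixes f :: "nat \<Rightarrow> real"
  assumes "\<And>i. i \<in> S \<Longrightarrow> 0 \<le> f i \<and> f i \<le> m" "finite S"
  shows "prod f S \<le> m ^ card S"
proof -
  have "prod f S \<le> prod (\<lambda>_. m) S" by (rule prod_mono) (use assms in auto)
  then show ?thesis by simp
qed

lemma prod_sum_pow:
  fixes A B :: "nat \<Rightarrow> real"
  assumes A: "\<And>i. 0 \<le> A i" and B: "\<And>j. 0 \<le> B j"
  shows "(\<Prod>i<ne. A i) * (\<Prod>j<na. B j) \<le> 1 + (\<Sum>i<ne. A i ^ (ne+na)) + (\<Sum>j<na. B j ^ (ne+na))"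
proof -
  define S where "S = insert 0 (A ` {..<ne} \<union> B ` {..<na})"
  define m where "m = Max S"
  have fS: "finite S" "S \<noteq> {}" unfolding S_def by auto
  have m0: "0 \<le> m" unfolding m_def S_def by (rule Max_ge) auto
  have mA: "A i \<le> m" if "i < ne" for i unfolding m_def S_def by (rule Max_ge) (use that in auto)
  have mB: "B i \<le> m" if "i < na" for i unfolding m_def S_def by (rule Max_ge) (use that in auto)
  have pA: "(\<Prod>i<ne. A i) \<le> m ^ ne"
    using prod_le_max_pow[of "{..<ne}" A m] A mA by auto
  have pB: "(\<Prod>j<na. B j) \<le> m ^ na"
    using prod_le_max_pow[of "{..<na}" B m] B mB by auto
  have "(\<Prod>i<ne. A i) * (\<Prod>j<na. B j) \<le> m ^ ne * m ^ na"
    by (intro mult_mono pA pB) (auto intro!: prod_nonneg A B m0 zero_le_power)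
  also have "\<dots> = m ^ (ne + na)" by (simp add: power_add)
  also have "\<dots> \<le> 1 + (\<Sum>i<ne. A i ^ (ne+na)) + (\<Sum>j<na. B j ^ (ne+na))"
  proof -
    have "m \<in> S" unfolding m_def using fS by (rule Max_in)
    then consider "m = 0" | i where "i < ne" "m = A i" | j where "j < na" "m = B j"
      unfolding S_def by auto
    then show ?thesis
    proof cases
      case 1
      have "m ^ (ne+na) \<le> 1" using 1 by (cases "ne + na") auto
      moreover have "0 \<le> (\<Sum>i<ne. A i ^ (ne+na))" "0 \<le> (\<Sum>j<na. B j ^ (ne+na))"
        using A B by (auto intro!: sum_nonneg)
      ultimately show ?thesis by linarith
    next
      case (2 i)
      have "A i ^ (ne+na) \<le> (\<Sum>i<ne. A i ^ (ne+na))"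
        by (rule member_le_sum) (use 2 A in auto)
      moreover have "0 \<le> (\<Sum>j<na. B j ^ (ne+na))" using B by (auto intro!: sum_nonneg)
      moreover have "m ^ (ne+na) = A i ^ (ne+na)" using 2 by simp
      ultimately show ?thesis by linarith
    next
      case (3 j)
      have "B j ^ (ne+na) \<le> (\<Sum>j<na. B j ^ (ne+na))"
        by (rule member_le_sum) (use 3 B in auto)
      moreover have "0 \<le> (\<Sum>i<ne. A i ^ (ne+na))" using A by (auto intro!: sum_nonneg)
      moreover have "m ^ (ne+na) = B j ^ (ne+na)" using 3 by simp
      ultimately show ?thesis by linarith
    qed
  qed
  finally show ?thesis .
qed

definition MC :: "real \<Rightarrow> real \<Rightarrow> nat \<Rightarrow> nat \<Rightarrow> real" where
  "MC \<beta> R2 ne na = 1 + real ne * (2 * exp ((real (ne+na))\<^sup>2 * \<beta>\<^sup>2 * R2 / 2))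
      + real na * (fact (ne+na) * (2 * exp (1/2)))"

lemma master:
  assumes b: "0 \<le> \<beta>" and es: "\<And>i. i < ne \<Longrightarrow> nrm2 d (es i) \<le> R2"
  shows "integrable (gauss d) (\<lambda>x. (\<Prod>i<ne. exp (\<beta> * \<bar>lf d (es i) x\<bar>)) * (\<Prod>j<na. \<bar>lf d (as j) x\<bar>)) \<and>
    (\<integral>x. (\<Prod>i<ne. exp (\<beta> * \<bar>lf d (es i) x\<bar>)) * (\<Prod>j<na. \<bar>lf d (as j) x\<bar>) \<partial>gauss d)
      \<le> MC \<beta> R2 ne na * (\<Prod>j<na. sqrt (nrm2 d (as j)))"
proof -
  let ?n = "ne + na"
  define F where "F x = (\<Prod>i<ne. exp (\<beta> * \<bar>lf d (es i) x\<bar>)) * (\<Prod>j<na. \<bar>lf d (nz d (as j)) x\<bar>)" for x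
  define D where "D x = 1 + (\<Sum>i<ne. exp (real ?n * \<beta> * \<bar>lf d (es i) x\<bar>))
      + (\<Sum>j<na. \<bar>lf d (nz d (as j)) x\<bar> ^ ?n)" for x
  define P where "P = (\<Prod>j<na. sqrt (nrm2 d (as j)))"
  have P0: "0 \<le> P" unfolding P_def by (auto intro!: prod_nonneg simp: nrm2_nonneg)
  have eqF: "(\<Prod>i<ne. exp (\<beta> * \<bar>lf d (es i) x\<bar>)) * (\<Prod>j<na. \<bar>lf d (as j) x\<bar>) = P * F x" for x
    unfolding F_def P_def by (subst nz_lf) (simp add: prod.distrib mult_ac)
  have FD: "F x \<le> D x" for x
  proof -
    have "F x \<le> 1 + (\<Sum>i<ne. exp (\<beta> * \<bar>lf d (es i) x\<bar>) ^ ?n) + (\<Sum>j<na. \<bar>lf d (nz d (as j)) x\<bar> ^ ?n)"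
      unfolding F_def by (rule prod_sum_pow) auto
    also have "\<dots> = D x" unfolding D_def by (simp add: exp_of_nat_mult[symmetric] mult_ac)
    finally show ?thesis .
  qed
  have F0: "0 \<le> F x" for x unfolding F_def by (auto intro!: prod_nonneg mult_nonneg_nonneg)
  have ie: "integrable (gauss d) (\<lambda>x. exp (real ?n * \<beta> * \<bar>lf d (es i) x\<bar>)) \<and>
      (\<integral>x. exp (real ?n * \<beta> * \<bar>lf d (es i) x\<bar>) \<partial>gauss d) \<le> 2 * exp ((real ?n)\<^sup>2 * \<beta>\<^sup>2 * R2 / 2)"
    if "i < ne" for i
  proof -
    have "integrable (gauss d) (\<lambda>x. exp (real ?n * \<beta> * \<bar>lf d (es i) x\<bar>)) \<and>
      (\<integral>x. exp (real ?n * \<beta> * \<bar>lf d (es i) x\<bar>) \<partial>gauss d) \<le> 2 * exp ((real ?n * \<beta>)\<^sup>2 * nrm2 d (es i) / 2)"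
      by (rule expabs) (use b in auto)
    moreover have "(real ?n * \<beta>)\<^sup>2 * nrm2 d (es i) \<le> (real ?n)\<^sup>2 * \<beta>\<^sup>2 * R2"
      using es[OF that] by (simp add: power_mult_distrib mult_left_mono)
    ultimately show ?thesis by (smt (verit) exp_le_cancel_iff divide_right_mono)
  qed
  have ip: "integrable (gauss d) (\<lambda>x. \<bar>lf d (nz d (as j)) x\<bar> ^ ?n) \<and>
      (\<integral>x. \<bar>lf d (nz d (as j)) x\<bar> ^ ?n \<partial>gauss d) \<le> fact ?n * (2 * exp (1/2))" for j
  proof -
    have "integrable (gauss d) (\<lambda>x. \<bar>lf d (nz d (as j)) x\<bar> ^ ?n) \<and>
      (\<integral>x. \<bar>lf d (nz d (as j)) x\<bar> ^ ?n \<partial>gauss d) \<le> fact ?n * (2 * exp (nrm2 d (nz d (as j)) / 2))"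
      by (rule powabs)
    moreover have "exp (nrm2 d (nz d (as j)) / 2) \<le> exp (1/2)" using nz_nrm2[of d "as j"] by simp
    ultimately show ?thesis by (smt (verit) fact_ge_zero mult_left_mono)
  qed
  interpret prob_space "gauss d" by (rule prob_gauss)
  have iD: "integrable (gauss d) D"
    unfolding D_def using ie ip by (intro Bochner_Integration.integrable_add Bochner_Integration.integrable_sum) auto
  have vD: "(\<integral>x. D x \<partial>gauss d) \<le> MC \<beta> R2 ne na"
  proof -
    have "(\<integral>x. D x \<partial>gauss d) = 1 + (\<Sum>i<ne. (\<integral>x. exp (real ?n * \<beta> * \<bar>lf d (es i) x\<bar>) \<partial>gauss d))
       + (\<Sum>j<na. (\<integral>x. \<bar>lf d (nz d (as j)) x\<bar> ^ ?n \<partial>gauss d))"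
      unfolding D_def using ie ip
      by (subst Bochner_Integration.integral_add, (auto intro!: Bochner_Integration.integrable_add Bochner_Integration.integrable_sum)[2])+
         (simp add: Bochner_Integration.integral_sum prob_space)
    also have "\<dots> \<le> 1 + (\<Sum>i<ne. 2 * exp ((real ?n)\<^sup>2 * \<beta>\<^sup>2 * R2 / 2)) + (\<Sum>j<na. fact ?n * (2 * exp (1/2)))"
      using ie ip by (intro add_mono sum_mono) auto
    also have "\<dots> = MC \<beta> R2 ne na" unfolding MC_def by simp
    finally show ?thesis .
  qed
  have mF: "F \<in> borel_measurable (gauss d)" unfolding F_def by measurable
  have iF: "integrable (gauss d) F"
    by (rule Bochner_Integration.integrable_bound[OF iD mF]) (use FD F0 in \<open>auto intro!: AE_I2 order_trans[OF FD]\<close>)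
  have "(\<integral>x. F x \<partial>gauss d) \<le> (\<integral>x. D x \<partial>gauss d)" by (rule Bochner_Integration.integral_mono[OF iF iD FD])
  then have "(\<integral>x. F x \<partial>gauss d) \<le> MC \<beta> R2 ne na" using vD by simp
  then have "P * (\<integral>x. F x \<partial>gauss d) \<le> P * MC \<beta> R2 ne na" using P0 by (rule mult_left_mono)
  then show ?thesis unfolding eqF P_def using iF by (simp add: mult_ac)
qed


lemma sig_pos: "0 < sigmoid t" unfolding sigmoid_def by (simp add: add_pos_pos)
lemma sig_lt1: "sigmoid t < 1" unfolding sigmoid_def by (simp add: divide_less_eq add_pos_pos)
lemma sig_inv: "1 / sigmoid t = 1 + exp (- t)" unfolding sigmoid_def by simp
lemma sig_nz: "1 + exp (- (t::real)) \<noteq> 0" using exp_gt_zero[of "-t"] by linarith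

lemma sig_inv1: "1 / (1 - sigmoid t) = 1 + exp t"
proof -
  have e: "1 - sigmoid t = exp (-t) / (1 + exp (-t))"
    unfolding sigmoid_def using sig_nz[of t] by (simp add: field_simps)
  have "1/(1 - sigmoid t) = (1 + exp(-t)) / exp(-t)" unfolding e by simp
  also have "\<dots> = 1/exp(-t) + 1" by (simp add: add_divide_distrib)
  also have "\<dots> = 1 + exp t" by (simp add: exp_minus inverse_eq_divide)
  finally show ?thesis .
qed

definition sd1 :: "real \<Rightarrow> real" where "sd1 t = sigmoid t * (1 - sigmoid t)"
definition sd2 :: "real \<Rightarrow> real" where "sd2 t = sd1 t * (1 - 2 * sigmoid t)"
definition sd3 :: "real \<Rightarrow> real" where "sd3 t = sd2 t * (1 - 2 * sigmoid t) - 2 * sd1 t * sd1 t"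

lemma DERIV_sig: "(sigmoid has_real_derivative sd1 t) (at t)"
proof -
  have "((\<lambda>t. 1 / (1 + exp (- t))) has_real_derivative
        (exp (-t) / ((1 + exp (-t)) * (1 + exp (-t))))) (at t)"
    using sig_nz[of t] by (auto intro!: derivative_eq_intros simp: field_simps)
  moreover have "(exp (-t) / ((1 + exp (-t)) * (1 + exp (-t)))) = sd1 t"
    unfolding sd1_def sigmoid_def using sig_nz[of t] by (simp add: field_simps)
  ultimately show ?thesis unfolding sigmoid_def[abs_def] by simp
qed

lemma DERIV_sig_chain[derivative_intros]:
  "(f has_real_derivative f') (at x) \<Longrightarrow> ((\<lambda>x. sigmoid (f x)) has_real_derivative sd1 (f x) * f') (at x)"
  by (rule DERIV_chain2[OF DERIV_sig])

lemma DERIV_sd1: "(sd1 has_real_derivative sd2 t) (at t)"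
proof -
  have "((\<lambda>t. sigmoid t * (1 - sigmoid t)) has_real_derivative
          sd1 t * (1 - sigmoid t) + sigmoid t * (- sd1 t)) (at t)"
    by (auto intro!: derivative_eq_intros)
  moreover have "sd1 t * (1 - sigmoid t) + sigmoid t * (- sd1 t) = sd2 t"
    unfolding sd2_def by (simp add: algebra_simps)
  ultimately show ?thesis unfolding sd1_def[abs_def] by simp
qed

lemma DERIV_sd1_chain[derivative_intros]:
  "(f has_real_derivative f') (at x) \<Longrightarrow> ((\<lambda>x. sd1 (f x)) has_real_derivative sd2 (f x) * f') (at x)"
  by (rule DERIV_chain2[OF DERIV_sd1])

lemma DERIV_sd2: "(sd2 has_real_derivative sd3 t) (at t)"
proof -
  have "((\<lambda>t. sd1 t * (1 - 2 * sigmoid t)) has_real_derivative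
          sd2 t * (1 - 2 * sigmoid t) + sd1 t * (- (2 * sd1 t))) (at t)"
    by (auto intro!: derivative_eq_intros)
  moreover have "sd2 t * (1 - 2 * sigmoid t) + sd1 t * (- (2 * sd1 t)) = sd3 t"
    unfolding sd3_def by (simp add: algebra_simps)
  ultimately show ?thesis unfolding sd2_def[abs_def] by simp
qed

lemma DERIV_sd2_chain[derivative_intros]:
  "(f has_real_derivative f') (at x) \<Longrightarrow> ((\<lambda>x. sd2 (f x)) has_real_derivative sd3 (f x) * f') (at x)"
  by (rule DERIV_chain2[OF DERIV_sd2])

lemma sd1_bd: "\<bar>sd1 t\<bar> \<le> 1"
  using sig_pos[of t] sig_lt1[of t] unfolding sd1_def
  by (simp add: abs_mult mult_le_one)

lemma sd2_bd: "\<bar>sd2 t\<bar> \<le> 1"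
proof -
  have "\<bar>1 - 2 * sigmoid t\<bar> \<le> 1" using sig_pos[of t] sig_lt1[of t] by auto
  then show ?thesis unfolding sd2_def using sd1_bd[of t] by (simp add: abs_mult mult_le_one)
qed

lemma sd3_bd: "\<bar>sd3 t\<bar> \<le> 3"
proof -
  have a: "\<bar>1 - 2 * sigmoid t\<bar> \<le> 1" using sig_pos[of t] sig_lt1[of t] by auto
  have "\<bar>sd2 t * (1 - 2 * sigmoid t)\<bar> \<le> 1" using sd2_bd[of t] a by (simp add: abs_mult mult_le_one)
  moreover have "\<bar>sd1 t\<bar> * \<bar>sd1 t\<bar> \<le> 1" using sd1_bd[of t] by (intro mult_le_one) auto
  then have "\<bar>2 * sd1 t * sd1 t\<bar> \<le> 2" by (simp add: abs_mult)
  ultimately show ?thesis unfolding sd3_def by linarith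
qed

lemma sig_lip: "\<bar>sigmoid a - sigmoid b\<bar> \<le> \<bar>a - b\<bar>"
proof -
  have "\<bar>(\<lambda>s. sigmoid (b + s)) (a - b) - (\<lambda>s. sigmoid (b + s)) 0\<bar> \<le> 1 * \<bar>a - b\<bar>"
  proof (rule mvt_abs[where f'="\<lambda>s. sd1 (b + s)"])
    show "((\<lambda>s. sigmoid (b + s)) has_real_derivative sd1 (b + s)) (at s)" for s
      by (auto intro!: derivative_eq_intros)
    show "\<bar>sd1 (b + s)\<bar> \<le> 1" for s by (rule sd1_bd)
  qed
  then show ?thesis by simp
qed

definition Lf :: "real \<Rightarrow> real \<Rightarrow> real" where
  "Lf a h = - a * ln h - (1 - a) * ln (1 - h)"
definition P1 :: "real \<Rightarrow> real \<Rightarrow> real" where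
  "P1 a h = - a / h + (1 - a) / (1 - h)"
definition P2 :: "real \<Rightarrow> real \<Rightarrow> real" where
  "P2 a h = a / h\<^sup>2 + (1 - a) / (1 - h)\<^sup>2"
definition P3 :: "real \<Rightarrow> real \<Rightarrow> real" where
  "P3 a h = - 2 * a / h ^ 3 + 2 * (1 - a) / (1 - h) ^ 3"

lemma xent_Lf: "a * xent_loss h 1 + (1 - a) * xent_loss h 0 = Lf a h"
  unfolding xent_loss_def Lf_def by simp

lemma d1: "h \<noteq> 0 \<Longrightarrow> ((\<lambda>h. c / h) has_real_derivative (- c / h\<^sup>2)) (at h)"
  by (auto intro!: derivative_eq_intros simp: power2_eq_square)
lemma d1': "1 - h \<noteq> 0 \<Longrightarrow> ((\<lambda>h. c / (1 - h)) has_real_derivative (c / (1 - h)\<^sup>2)) (at h)"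
  by (auto intro!: derivative_eq_intros simp: power2_eq_square)
lemma d2: "(h::real) \<noteq> 0 \<Longrightarrow> ((\<lambda>h. c / h\<^sup>2) has_real_derivative (- 2 * c / h ^ 3)) (at h)"
  by (auto intro!: derivative_eq_intros simp: power2_eq_square power3_eq_cube field_simps)
lemma d2': assumes "1 - (h::real) \<noteq> 0"
  shows "((\<lambda>h. c / (1 - h)\<^sup>2) has_real_derivative (2 * c / (1 - h) ^ 3)) (at h)"
proof -
  have "((\<lambda>h. c / (1 - h)\<^sup>2) has_real_derivative (- 2 * c / (1 - h) ^ 3) * (- 1)) (at h)"
  proof (rule DERIV_chain2[where f="\<lambda>u. c / u\<^sup>2" and g="\<lambda>h. 1 - h" and x=h])
    show "((\<lambda>u. c / u\<^sup>2) has_real_derivative - 2 * c / (1 - h) ^ 3) (at (1 - h))"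
      using d2[of "1 - h" c] assms by simp
  qed (auto intro!: derivative_eq_intros)
  then show ?thesis by simp
qed
lemma dl: "0 < h \<Longrightarrow> ((\<lambda>h. - a * ln h) has_real_derivative (- a / h)) (at h)"
  by (auto intro!: derivative_eq_intros simp: field_simps)
lemma dl': "h < 1 \<Longrightarrow> ((\<lambda>h. - b * ln (1 - h)) has_real_derivative (b / (1 - h))) (at h)"
  by (auto intro!: derivative_eq_intros simp: field_simps)

lemma DERIV_Lf: assumes "0 < h" "h < 1" shows "(Lf a has_real_derivative P1 a h) (at h)"
proof -
  have "((\<lambda>h. - a * ln h + - (1 - a) * ln (1 - h)) has_real_derivative
     (- a / h + (1 - a) / (1 - h))) (at h)"
    by (rule DERIV_add[OF dl dl']) (use assms in auto)
  moreover have "Lf a = (\<lambda>h. - a * ln h + - (1 - a) * ln (1 - h))" by (auto simp: Lf_def fun_eq_iff algebra_simps)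
  ultimately show ?thesis unfolding P1_def by simp
qed

lemma DERIV_P1: assumes "0 < h" "h < 1" shows "(P1 a has_real_derivative P2 a h) (at h)"
proof -
  have "((\<lambda>h. (- a) / h + (1 - a) / (1 - h)) has_real_derivative
     (- (- a) / h\<^sup>2 + (1 - a) / (1 - h)\<^sup>2)) (at h)"
    by (rule DERIV_add[OF d1 d1']) (use assms in auto)
  then show ?thesis unfolding P1_def[abs_def] P2_def by simp
qed

lemma DERIV_P2: assumes "0 < h" "h < 1" shows "(P2 a has_real_derivative P3 a h) (at h)"
proof -
  have "((\<lambda>h. a / h\<^sup>2 + (1 - a) / (1 - h)\<^sup>2) has_real_derivative
     (- 2 * a / h ^ 3 + 2 * (1 - a) / (1 - h) ^ 3)) (at h)"
    by (rule DERIV_add[OF d2 d2']) (use assms in auto)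
  then show ?thesis unfolding P2_def[abs_def] P3_def by simp
qed

definition Qf :: "real \<Rightarrow> real" where "Qf h = 1 / h + 1 / (1 - h)"

lemma Qf_pos: "0 < h \<Longrightarrow> h < 1 \<Longrightarrow> 0 < Qf h" unfolding Qf_def by (intro add_pos_pos divide_pos_pos) auto

lemma cube_sum: "((x::real) + y)^3 = x^3 + y^3 + 3 * x * y * (x + y)"
  by (simp add: power3_eq_cube algebra_simps)

lemma P1_bd: assumes "0 \<le> a" "a \<le> 1" "0 < h" "h < 1" shows "\<bar>P1 a h\<bar> \<le> Qf h"
proof -
  have "\<bar>a / h\<bar> \<le> 1 / h" using assms by (simp add: divide_right_mono)
  moreover have "\<bar>(1 - a) / (1 - h)\<bar> \<le> 1 / (1 - h)" using assms by (simp add: divide_right_mono)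
  ultimately show ?thesis unfolding P1_def Qf_def by linarith
qed

lemma P1_bd2: assumes "0 \<le> a" "a \<le> 1" "0 < h" "h < 1" shows "\<bar>P1 a h\<bar> \<le> \<bar>h - a\<bar> * Qf h"
proof -
  have nz: "h \<noteq> 0" "1 - h \<noteq> 0" using assms by auto
  have "P1 a h = (h - a) * Qf h" unfolding P1_def Qf_def using nz by (simp add: field_simps)
  then show ?thesis using Qf_pos[of h] assms by (simp add: abs_mult)
qed

lemma P2_bd: assumes "0 \<le> a" "a \<le> 1" "0 < h" "h < 1" shows "\<bar>P2 a h\<bar> \<le> (Qf h)\<^sup>2"
proof -
  have "0 \<le> a / h\<^sup>2" "a / h\<^sup>2 \<le> 1 / h\<^sup>2" using assms by (auto simp: divide_right_mono)
  moreover have "0 \<le> (1 - a) / (1 - h)\<^sup>2" "(1 - a) / (1 - h)\<^sup>2 \<le> 1 / (1 - h)\<^sup>2"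
    using assms by (auto simp: divide_right_mono)
  moreover have "1 / h\<^sup>2 + 1 / (1 - h)\<^sup>2 \<le> (Qf h)\<^sup>2"
    unfolding Qf_def using assms by (simp add: power2_sum power_divide)
  ultimately show ?thesis unfolding P2_def by linarith
qed

lemma P3_bd: assumes "0 \<le> a" "a \<le> 1" "0 < h" "h < 1" shows "\<bar>P3 a h\<bar> \<le> 2 * (Qf h) ^ 3"
proof -
  have "0 \<le> 2 * a / h ^ 3" "2 * a / h ^ 3 \<le> 2 / h ^ 3" using assms by (auto simp: divide_right_mono)
  moreover have "0 \<le> 2 * (1 - a) / (1 - h) ^ 3" "2 * (1 - a) / (1 - h) ^ 3 \<le> 2 / (1 - h) ^ 3"
    using assms by (auto simp: divide_right_mono)
  moreover have "1 / h ^ 3 + 1 / (1 - h) ^ 3 \<le> (Qf h) ^ 3"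
  proof -
    have u: "0 < 1 / h" "0 < 1 / (1 - h)" using assms by auto
    have "(1/h + 1/(1-h))^3 = (1/h)^3 + (1/(1-h))^3 + 3 * (1/h) * (1/(1-h)) * (1/h + 1/(1-h))"
      by (rule cube_sum)
    moreover have "0 \<le> 3 * (1/h) * (1/(1-h)) * (1/h + 1/(1-h))" using u by simp
    ultimately show ?thesis unfolding Qf_def by (simp add: power_divide)
  qed
  ultimately show ?thesis unfolding P3_def by linarith
qed

lemma Lf_bd: assumes "0 \<le> a" "a \<le> 1" "0 < h" "h < 1" shows "\<bar>Lf a h\<bar> \<le> Qf h"
proof -
  have l1: "0 \<le> - ln h" "- ln h \<le> 1 / h"
    using assms ln_le_minus_one[of "1/h"] by (auto simp: ln_div ln_ge_zero_iff)
  have l2: "0 \<le> - ln (1 - h)" "- ln (1 - h) \<le> 1 / (1 - h)"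
    using assms ln_le_minus_one[of "1/(1-h)"] by (auto simp: ln_div)
  have "a * (- ln h) \<le> - ln h" using l1 assms by (intro mult_left_le_one_le) auto
  moreover have "0 \<le> a * (- ln h)" using l1 assms by (intro mult_nonneg_nonneg) auto
  moreover have "(1 - a) * (- ln (1 - h)) \<le> - ln (1 - h)" using l2 assms by (intro mult_left_le_one_le) auto
  moreover have "0 \<le> (1 - a) * (- ln (1 - h))" using l2 assms by (intro mult_nonneg_nonneg) auto
  moreover have "Lf a h = a * (- ln h) + (1 - a) * (- ln (1 - h))" by (simp add: Lf_def)
  ultimately show ?thesis unfolding Qf_def using l1 l2 by linarith
qed


lemma sigmoid_meas[measurable]: "sigmoid \<in> borel_measurable borel"
  unfolding sigmoid_def[abs_def] by measurable
lemma sd1_meas[measurable]: "sd1 \<in> borel_measurable borel" unfolding sd1_def[abs_def] by measurable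
lemma sd2_meas[measurable]: "sd2 \<in> borel_measurable borel" unfolding sd2_def[abs_def] by measurable
lemma sd3_meas[measurable]: "sd3 \<in> borel_measurable borel" unfolding sd3_def[abs_def] by measurable
lemma Lf_meas[measurable]: assumes [measurable]: "f \<in> borel_measurable M" "g \<in> borel_measurable M" shows "(\<lambda>x. Lf (f x) (g x)) \<in> borel_measurable M" unfolding Lf_def by measurable
lemma P1_meas[measurable]: assumes [measurable]: "f \<in> borel_measurable M" "g \<in> borel_measurable M" shows "(\<lambda>x. P1 (f x) (g x)) \<in> borel_measurable M" unfolding P1_def by measurable
lemma P2_meas[measurable]: assumes [measurable]: "f \<in> borel_measurable M" "g \<in> borel_measurable M" shows "(\<lambda>x. P2 (f x) (g x)) \<in> borel_measurable M" unfolding P2_def by measurable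
lemma P3_meas[measurable]: assumes [measurable]: "f \<in> borel_measurable M" "g \<in> borel_measurable M" shows "(\<lambda>x. P3 (f x) (g x)) \<in> borel_measurable M" unfolding P3_def by measurable

lemma lf_add: "lf d (\<lambda>i. c i + t * c' i) x = lf d c x + t * lf d c' x"
  unfolding lf_def by (simp add: algebra_simps sum.distrib sum_distrib_left)

lemma jensen_pow:
  fixes y :: "nat \<Rightarrow> real"
  assumes "0 < K" "\<And>j. 0 \<le> y j"
  shows "((1 / real K) * (\<Sum>j<K. y j)) ^ m \<le> (1 / real K) * (\<Sum>j<K. y j ^ m)"
proof -
  have cvx: "convex_on {0..} (\<lambda>x::real. x ^ m)"
  proof (cases "even m")
    case True then show ?thesis using convex_power_even[of m] convex_on_subset by blast
  next
    case False then show ?thesis using convex_power_odd[of m] by blast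
  qed
  have "(\<lambda>x. x ^ m) (\<Sum>j\<in>{..<K}. (1 / real K) *\<^sub>R y j) \<le> (\<Sum>j\<in>{..<K}. (1 / real K) * (\<lambda>x. x ^ m) (y j))"
    by (rule convex_on_sum[OF _ _ cvx]) (use assms in auto)
  then show ?thesis by (simp add: sum_distrib_left)
qed

lemma inv_avg:
  fixes y :: "nat \<Rightarrow> real"
  assumes "0 < K" "\<And>j. 0 < y j"
  shows "1 / ((1 / real K) * (\<Sum>j<K. y j)) \<le> (1 / real K) * (\<Sum>j<K. 1 / y j)"
proof -
  have cvx: "convex_on {0<..} (inverse :: real \<Rightarrow> real)" by (rule convex_on_inverse) auto
  have "inverse (\<Sum>j\<in>{..<K}. (1 / real K) *\<^sub>R y j) \<le> (\<Sum>j\<in>{..<K}. (1 / real K) * inverse (y j))"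
    by (rule convex_on_sum[OF _ _ cvx]) (use assms in auto)
  then show ?thesis by (simp add: sum_distrib_left inverse_eq_divide)
qed

lemma exp_abs4: "2 + exp (s::real) + exp (- s) \<le> 4 * exp \<bar>s\<bar>"
proof -
  have "exp s \<le> exp \<bar>s\<bar>" "exp (-s) \<le> exp \<bar>s\<bar>" "1 \<le> exp \<bar>s\<bar>" by auto
  then show ?thesis by linarith
qed

locale gs =
  fixes d K :: nat and I :: "'p set" and Mt :: "nat \<Rightarrow> 'p \<Rightarrow> nat \<Rightarrow> real"
  assumes finI: "finite I" and Kpos: "0 < K"
begin

definition cv :: "nat \<Rightarrow> ('p \<Rightarrow> real) \<Rightarrow> nat \<Rightarrow> real" where
  "cv k \<theta> = (\<lambda>i. \<Sum>p\<in>I. \<theta> p * Mt k p i)"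
definition sk :: "nat \<Rightarrow> ('p \<Rightarrow> real) \<Rightarrow> (nat \<Rightarrow> real) \<Rightarrow> real" where
  "sk k \<theta> x = lf d (cv k \<theta>) x"
definition gH :: "('p \<Rightarrow> real) \<Rightarrow> (nat \<Rightarrow> real) \<Rightarrow> real" where
  "gH \<theta> x = (1 / real K) * (\<Sum>k<K. sigmoid (sk k \<theta> x))"
definition DH where "DH \<theta> z x = (1 / real K) * (\<Sum>k<K. sd1 (sk k \<theta> x) * sk k z x)"
definition D2H where "D2H \<theta> z v x = (1 / real K) * (\<Sum>k<K. sd2 (sk k \<theta> x) * sk k z x * sk k v x)"
definition D3H where "D3H \<theta> z v w x = (1 / real K) * (\<Sum>k<K. sd3 (sk k \<theta> x) * sk k z x * sk k v x * sk k w x)"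
definition L0 where "L0 a \<theta> x = Lf a (gH \<theta> x)"
definition L1 where "L1 a \<theta> z x = P1 a (gH \<theta> x) * DH \<theta> z x"
definition L2 where "L2 a \<theta> z v x = P2 a (gH \<theta> x) * DH \<theta> z x * DH \<theta> v x + P1 a (gH \<theta> x) * D2H \<theta> z v x"
definition L3 where "L3 a \<theta> z v w x = P3 a (gH \<theta> x) * DH \<theta> z x * DH \<theta> v x * DH \<theta> w x
   + P2 a (gH \<theta> x) * (D2H \<theta> z w x * DH \<theta> v x + DH \<theta> z x * D2H \<theta> v w x + DH \<theta> w x * D2H \<theta> z v x)
   + P1 a (gH \<theta> x) * D3H \<theta> z v w x"

lemma cv_lin: "cv k (\<lambda>r. \<theta> r + t * e r) = (\<lambda>i. cv k \<theta> i + t * cv k e i)"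
  unfolding cv_def by (simp add: algebra_simps sum.distrib sum_distrib_left)

lemma sk_lin: "sk k (\<lambda>r. \<theta> r + t * e r) x = sk k \<theta> x + t * sk k e x"
  unfolding sk_def cv_lin lf_add ..

lemma sk_meas[measurable]: "(\<lambda>x. sk k \<theta> x) \<in> borel_measurable (gauss d)"
  unfolding sk_def by simp

lemma gH_meas[measurable]: "(\<lambda>x. gH \<theta> x) \<in> borel_measurable (gauss d)"
  unfolding gH_def by measurable

lemma gH_bds: "0 < gH \<theta> x" "gH \<theta> x < 1"
proof -
  have "0 < (\<Sum>k<K. sigmoid (sk k \<theta> x))" using Kpos by (intro sum_pos) (auto simp: sig_pos)
  then show "0 < gH \<theta> x" unfolding gH_def using Kpos by simp
  have "(\<Sum>k<K. sigmoid (sk k \<theta> x)) < (\<Sum>k<K. 1)" using Kpos by (intro sum_strict_mono) (auto simp: sig_lt1)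
  then show "gH \<theta> x < 1" unfolding gH_def using Kpos by (simp add: divide_less_eq)
qed

lemma der_gH: "((\<lambda>t. gH (\<lambda>r. \<theta> r + t * e r) x) has_real_derivative DH (\<lambda>r. \<theta> r + t * e r) e x) (at t)"
proof -
  have "((\<lambda>t. (1 / real K) * (\<Sum>k<K. sigmoid (sk k \<theta> x + t * sk k e x))) has_real_derivative
     (1 / real K) * (\<Sum>k<K. sd1 (sk k \<theta> x + t * sk k e x) * sk k e x)) (at t)"
    using Kpos by (auto intro!: derivative_eq_intros)
  then show ?thesis unfolding gH_def DH_def sk_lin .
qed

lemma der_DH: "((\<lambda>t. DH (\<lambda>r. \<theta> r + t * e r) z x) has_real_derivative D2H (\<lambda>r. \<theta> r + t * e r) z e x) (at t)"
proof -
  have "((\<lambda>t. (1 / real K) * (\<Sum>k<K. sd1 (sk k \<theta> x + t * sk k e x) * sk k z x)) has_real_derivative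
     (1 / real K) * (\<Sum>k<K. sd2 (sk k \<theta> x + t * sk k e x) * sk k z x * sk k e x)) (at t)"
    using Kpos by (auto intro!: derivative_eq_intros sum.cong)
  then show ?thesis unfolding DH_def D2H_def sk_lin .
qed

lemma der_D2H: "((\<lambda>t. D2H (\<lambda>r. \<theta> r + t * e r) z v x) has_real_derivative D3H (\<lambda>r. \<theta> r + t * e r) z v e x) (at t)"
proof -
  have "((\<lambda>t. (1 / real K) * (\<Sum>k<K. sd2 (sk k \<theta> x + t * sk k e x) * sk k z x * sk k v x)) has_real_derivative
     (1 / real K) * (\<Sum>k<K. sd3 (sk k \<theta> x + t * sk k e x) * sk k z x * sk k v x * sk k e x)) (at t)"
    using Kpos by (auto intro!: derivative_eq_intros sum.cong)
  then show ?thesis unfolding D2H_def D3H_def sk_lin .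
qed

lemma der_P0: "((\<lambda>t. Lf a (gH (\<lambda>r. \<theta> r + t * e r) x)) has_real_derivative
     P1 a (gH (\<lambda>r. \<theta> r + t * e r) x) * DH (\<lambda>r. \<theta> r + t * e r) e x) (at t)"
  by (rule DERIV_chain2[where f="Lf a", OF DERIV_Lf der_gH]) (rule gH_bds)+

lemma der_P1: "((\<lambda>t. P1 a (gH (\<lambda>r. \<theta> r + t * e r) x)) has_real_derivative
     P2 a (gH (\<lambda>r. \<theta> r + t * e r) x) * DH (\<lambda>r. \<theta> r + t * e r) e x) (at t)"
  by (rule DERIV_chain2[where f="P1 a", OF DERIV_P1 der_gH]) (rule gH_bds)+

lemma der_P2: "((\<lambda>t. P2 a (gH (\<lambda>r. \<theta> r + t * e r) x)) has_real_derivative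
     P3 a (gH (\<lambda>r. \<theta> r + t * e r) x) * DH (\<lambda>r. \<theta> r + t * e r) e x) (at t)"
  by (rule DERIV_chain2[where f="P2 a", OF DERIV_P2 der_gH]) (rule gH_bds)+

lemma der_L0: "((\<lambda>t. L0 a (\<lambda>r. \<theta> r + t * e r) x) has_real_derivative L1 a (\<lambda>r. \<theta> r + t * e r) e x) (at t)"
  unfolding L0_def L1_def by (rule der_P0)

lemma der_L1: "((\<lambda>t. L1 a (\<lambda>r. \<theta> r + t * e r) z x) has_real_derivative L2 a (\<lambda>r. \<theta> r + t * e r) z e x) (at t)"
  unfolding L1_def L2_def
  by (rule DERIV_cong[OF DERIV_mult[OF der_P1 der_DH]]) (simp add: algebra_simps)

lemma der_L2: "((\<lambda>t. L2 a (\<lambda>r. \<theta> r + t * e r) z v x) has_real_derivative L3 a (\<lambda>r. \<theta> r + t * e r) z v e x) (at t)"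
  unfolding L2_def L3_def
  by (rule DERIV_cong[OF DERIV_add[OF DERIV_mult[OF DERIV_mult[OF der_P2 der_DH] der_DH] DERIV_mult[OF der_P1 der_D2H]]])
     (simp add: algebra_simps)

lemma Qf_gH: "Qf (gH \<theta> x) \<le> (1 / real K) * (\<Sum>j<K. 4 * exp \<bar>sk j \<theta> x\<bar>)"
proof -
  have h1: "1 / gH \<theta> x \<le> (1 / real K) * (\<Sum>j<K. 1 / sigmoid (sk j \<theta> x))"
    unfolding gH_def by (rule inv_avg[OF Kpos]) (simp add: sig_pos)
  have e: "1 - gH \<theta> x = (1 / real K) * (\<Sum>j<K. 1 - sigmoid (sk j \<theta> x))"
    unfolding gH_def using Kpos by (simp add: sum_subtractf field_simps)
  have h2: "1 / (1 - gH \<theta> x) \<le> (1 / real K) * (\<Sum>j<K. 1 / (1 - sigmoid (sk j \<theta> x)))"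
    unfolding e by (rule inv_avg[OF Kpos]) (simp add: sig_lt1)
  have "Qf (gH \<theta> x) \<le> (1 / real K) * (\<Sum>j<K. 1 / sigmoid (sk j \<theta> x) + 1 / (1 - sigmoid (sk j \<theta> x)))"
    unfolding Qf_def using h1 h2 by (simp add: sum.distrib distrib_left)
  also have "\<dots> \<le> (1 / real K) * (\<Sum>j<K. 4 * exp \<bar>sk j \<theta> x\<bar>)"
    unfolding sig_inv sig_inv1
  proof (intro mult_left_mono sum_mono)
    fix j show "1 + exp (- sk j \<theta> x) + (1 + exp (sk j \<theta> x)) \<le> 4 * exp \<bar>sk j \<theta> x\<bar>"
      using exp_abs4[of "sk j \<theta> x"] by linarith
  qed (use Kpos in auto)
  finally show ?thesis .
qed

lemma Qf_pow: "(Qf (gH \<theta> x)) ^ m \<le> (1 / real K) * (\<Sum>j<K. 4 ^ m * exp (real m * \<bar>sk j \<theta> x\<bar>))"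
proof -
  have "(Qf (gH \<theta> x)) ^ m \<le> ((1 / real K) * (\<Sum>j<K. 4 * exp \<bar>sk j \<theta> x\<bar>)) ^ m"
    by (rule power_mono[OF Qf_gH]) (use Qf_pos gH_bds in \<open>auto intro: less_imp_le\<close>)
  also have "\<dots> \<le> (1 / real K) * (\<Sum>j<K. (4 * exp \<bar>sk j \<theta> x\<bar>) ^ m)"
    by (rule jensen_pow[OF Kpos]) auto
  also have "\<dots> = (1 / real K) * (\<Sum>j<K. 4 ^ m * exp (real m * \<bar>sk j \<theta> x\<bar>))"
    by (simp add: power_mult_distrib exp_of_nat_mult)
  finally show ?thesis .
qed

lemma DH_bd: "\<bar>DH \<theta> z x\<bar> \<le> (1 / real K) * (\<Sum>k<K. \<bar>sk k z x\<bar>)"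
proof -
  have "\<bar>\<Sum>k<K. sd1 (sk k \<theta> x) * sk k z x\<bar> \<le> (\<Sum>k<K. \<bar>sd1 (sk k \<theta> x) * sk k z x\<bar>)"
    by (rule sum_abs)
  also have "\<dots> \<le> (\<Sum>k<K. \<bar>sk k z x\<bar>)"
    using sd1_bd by (intro sum_mono) (auto simp: abs_mult intro: mult_left_le_one_le)
  finally show ?thesis unfolding DH_def using Kpos by (simp add: abs_mult divide_right_mono)
qed

lemma D2H_bd: "\<bar>D2H \<theta> z v x\<bar> \<le> (1 / real K) * (\<Sum>k<K. \<bar>sk k z x\<bar> * \<bar>sk k v x\<bar>)"
proof -
  have "\<bar>\<Sum>k<K. sd2 (sk k \<theta> x) * sk k z x * sk k v x\<bar> \<le> (\<Sum>k<K. \<bar>sd2 (sk k \<theta> x) * sk k z x * sk k v x\<bar>)"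
    by (rule sum_abs)
  also have "\<dots> \<le> (\<Sum>k<K. \<bar>sk k z x\<bar> * \<bar>sk k v x\<bar>)"
  proof (intro sum_mono)
    fix k
    have "\<bar>sd2 (sk k \<theta> x)\<bar> * (\<bar>sk k z x\<bar> * \<bar>sk k v x\<bar>) \<le> 1 * (\<bar>sk k z x\<bar> * \<bar>sk k v x\<bar>)"
      using sd2_bd by (intro mult_right_mono) auto
    then show "\<bar>sd2 (sk k \<theta> x) * sk k z x * sk k v x\<bar> \<le> \<bar>sk k z x\<bar> * \<bar>sk k v x\<bar>"
      by (simp add: abs_mult mult_ac)
  qed
  finally show ?thesis unfolding D2H_def using Kpos by (simp add: abs_mult divide_right_mono)
qed

lemma D3H_bd: "\<bar>D3H \<theta> z v w x\<bar> \<le> 3 * ((1 / real K) * (\<Sum>k<K. \<bar>sk k z x\<bar> * \<bar>sk k v x\<bar> * \<bar>sk k w x\<bar>))"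
proof -
  have "\<bar>\<Sum>k<K. sd3 (sk k \<theta> x) * sk k z x * sk k v x * sk k w x\<bar> \<le> (\<Sum>k<K. \<bar>sd3 (sk k \<theta> x) * sk k z x * sk k v x * sk k w x\<bar>)"
    by (rule sum_abs)
  also have "\<dots> \<le> (\<Sum>k<K. 3 * (\<bar>sk k z x\<bar> * \<bar>sk k v x\<bar> * \<bar>sk k w x\<bar>))"
  proof (intro sum_mono)
    fix k
    have "\<bar>sd3 (sk k \<theta> x)\<bar> * (\<bar>sk k z x\<bar> * \<bar>sk k v x\<bar> * \<bar>sk k w x\<bar>) \<le> 3 * (\<bar>sk k z x\<bar> * \<bar>sk k v x\<bar> * \<bar>sk k w x\<bar>)"
      using sd3_bd by (intro mult_right_mono) auto
    then show "\<bar>sd3 (sk k \<theta> x) * sk k z x * sk k v x * sk k w x\<bar> \<le> 3 * (\<bar>sk k z x\<bar> * \<bar>sk k v x\<bar> * \<bar>sk k w x\<bar>)"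
      by (simp add: abs_mult mult_ac)
  qed
  finally show ?thesis unfolding D3H_def using Kpos by (simp add: abs_mult divide_right_mono sum_distrib_left[symmetric] mult_ac)
qed

lemma gH_lip: "\<bar>gH \<theta> x - gH \<theta>' x\<bar> \<le> (1 / real K) * (\<Sum>k<K. \<bar>sk k \<theta> x - sk k \<theta>' x\<bar>)"
proof -
  have "\<bar>(\<Sum>k<K. sigmoid (sk k \<theta> x)) - (\<Sum>k<K. sigmoid (sk k \<theta>' x))\<bar>
      = \<bar>\<Sum>k<K. sigmoid (sk k \<theta> x) - sigmoid (sk k \<theta>' x)\<bar>" by (simp add: sum_subtractf)
  also have "\<dots> \<le> (\<Sum>k<K. \<bar>sigmoid (sk k \<theta> x) - sigmoid (sk k \<theta>' x)\<bar>)" by (rule sum_abs)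
  also have "\<dots> \<le> (\<Sum>k<K. \<bar>sk k \<theta> x - sk k \<theta>' x\<bar>)" by (intro sum_mono sig_lip)
  finally show ?thesis unfolding gH_def using Kpos
    by (simp add: abs_divide divide_right_mono diff_divide_distrib[symmetric])
qed

lemma exp_shift:
  assumes "\<bar>t\<bar> \<le> 1" "0 \<le> m"
  shows "exp (m * \<bar>sk j (\<lambda>r. \<theta> r + t * e r) x\<bar>) \<le> exp (m * \<bar>sk j \<theta> x\<bar>) * exp (m * \<bar>sk j e x\<bar>)"
proof -
  have "\<bar>sk j \<theta> x + t * sk j e x\<bar> \<le> \<bar>sk j \<theta> x\<bar> + \<bar>sk j e x\<bar>"
  proof -
    have "\<bar>t * sk j e x\<bar> \<le> \<bar>sk j e x\<bar>" using assms by (simp add: abs_mult mult_left_le_one_le)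
    then show ?thesis by linarith
  qed
  then have "m * \<bar>sk j \<theta> x + t * sk j e x\<bar> \<le> m * \<bar>sk j \<theta> x\<bar> + m * \<bar>sk j e x\<bar>"
    using assms(2) by (metis distrib_left mult_left_mono)
  then show ?thesis unfolding sk_lin by (simp add: exp_add[symmetric])
qed

end


lemma M2:
  assumes b: "0 \<le> \<beta>" and u: "nrm2 d u \<le> R2" "nrm2 d u' \<le> R2"
  shows "integrable (gauss d) (\<lambda>x. exp (\<beta> * \<bar>lf d u x\<bar>) * exp (\<beta> * \<bar>lf d u' x\<bar>) * (\<Prod>j<n. \<bar>lf d (as j) x\<bar>)) \<and>
    (\<integral>x. exp (\<beta> * \<bar>lf d u x\<bar>) * exp (\<beta> * \<bar>lf d u' x\<bar>) * (\<Prod>j<n. \<bar>lf d (as j) x\<bar>) \<partial>gauss d)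
      \<le> MC \<beta> R2 2 n * (\<Prod>j<n. sqrt (nrm2 d (as j)))"
proof -
  let ?es = "\<lambda>i::nat. if i = 0 then u else u'"
  have "integrable (gauss d) (\<lambda>x. (\<Prod>i<2. exp (\<beta> * \<bar>lf d (?es i) x\<bar>)) * (\<Prod>j<n. \<bar>lf d (as j) x\<bar>)) \<and>
    (\<integral>x. (\<Prod>i<2. exp (\<beta> * \<bar>lf d (?es i) x\<bar>)) * (\<Prod>j<n. \<bar>lf d (as j) x\<bar>) \<partial>gauss d)
      \<le> MC \<beta> R2 2 n * (\<Prod>j<n. sqrt (nrm2 d (as j)))"
    by (rule master[OF b]) (use u in auto)
  moreover have "(\<Prod>i<2. exp (\<beta> * \<bar>lf d (?es i) x\<bar>)) = exp (\<beta> * \<bar>lf d u x\<bar>) * exp (\<beta> * \<bar>lf d u' x\<bar>)" for x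
    by (simp add: numeral_2_eq_2)
  ultimately show ?thesis by simp
qed

lemma prod3: "(\<Prod>j<3. f j) = f 0 * f 1 * (f 2 :: real)" for f :: "nat \<Rightarrow> real"
  by (simp add: eval_nat_numeral)
lemma prod4: "(\<Prod>j<4. f j) = f 0 * f 1 * f 2 * (f 3 :: real)" for f :: "nat \<Rightarrow> real"
  by (simp add: eval_nat_numeral)

definition sel :: "'a \<Rightarrow> 'a \<Rightarrow> 'a \<Rightarrow> 'a \<Rightarrow> nat \<Rightarrow> 'a" where
  "sel a b c e j = (if j = 0 then a else if j = 1 then b else if j = 2 then c else e)"

lemma M2_0:
  assumes "0 \<le> \<beta>" "nrm2 d u \<le> R2" "nrm2 d u' \<le> R2"
  shows "integrable (gauss d) (\<lambda>x. exp (\<beta> * \<bar>lf d u x\<bar>) * exp (\<beta> * \<bar>lf d u' x\<bar>)) \<and>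
    (\<integral>x. exp (\<beta> * \<bar>lf d u x\<bar>) * exp (\<beta> * \<bar>lf d u' x\<bar>) \<partial>gauss d) \<le> MC \<beta> R2 2 0"
  using M2[OF assms, where n=0] by simp

lemma M2_1:
  assumes "0 \<le> \<beta>" "nrm2 d u \<le> R2" "nrm2 d u' \<le> R2"
  shows "integrable (gauss d) (\<lambda>x. exp (\<beta> * \<bar>lf d u x\<bar>) * exp (\<beta> * \<bar>lf d u' x\<bar>) * \<bar>lf d a x\<bar>) \<and>
    (\<integral>x. exp (\<beta> * \<bar>lf d u x\<bar>) * exp (\<beta> * \<bar>lf d u' x\<bar>) * \<bar>lf d a x\<bar> \<partial>gauss d)
     \<le> MC \<beta> R2 2 1 * sqrt (nrm2 d a)"
  using M2[OF assms, where n=1 and as="\<lambda>_. a"] by simp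

lemma M2_2:
  assumes "0 \<le> \<beta>" "nrm2 d u \<le> R2" "nrm2 d u' \<le> R2"
  shows "integrable (gauss d) (\<lambda>x. exp (\<beta> * \<bar>lf d u x\<bar>) * exp (\<beta> * \<bar>lf d u' x\<bar>) * \<bar>lf d a x\<bar> * \<bar>lf d b x\<bar>) \<and>
    (\<integral>x. exp (\<beta> * \<bar>lf d u x\<bar>) * exp (\<beta> * \<bar>lf d u' x\<bar>) * \<bar>lf d a x\<bar> * \<bar>lf d b x\<bar> \<partial>gauss d)
     \<le> MC \<beta> R2 2 2 * (sqrt (nrm2 d a) * sqrt (nrm2 d b))"
  using M2[OF assms, where n=2 and as="sel a b a a"] by (simp add: numeral_2_eq_2 sel_def mult_ac)

lemma M2_3:
  assumes "0 \<le> \<beta>" "nrm2 d u \<le> R2" "nrm2 d u' \<le> R2"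
  shows "integrable (gauss d) (\<lambda>x. exp (\<beta> * \<bar>lf d u x\<bar>) * exp (\<beta> * \<bar>lf d u' x\<bar>) * \<bar>lf d a x\<bar> * \<bar>lf d b x\<bar> * \<bar>lf d c x\<bar>) \<and>
    (\<integral>x. exp (\<beta> * \<bar>lf d u x\<bar>) * exp (\<beta> * \<bar>lf d u' x\<bar>) * \<bar>lf d a x\<bar> * \<bar>lf d b x\<bar> * \<bar>lf d c x\<bar> \<partial>gauss d)
     \<le> MC \<beta> R2 2 3 * (sqrt (nrm2 d a) * sqrt (nrm2 d b) * sqrt (nrm2 d c))"
  using M2[OF assms, where n=3 and as="sel a b c c"] by (simp add: prod3 sel_def mult_ac)

lemma M2_4:
  assumes "0 \<le> \<beta>" "nrm2 d u \<le> R2" "nrm2 d u' \<le> R2"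
  shows "integrable (gauss d) (\<lambda>x. exp (\<beta> * \<bar>lf d u x\<bar>) * exp (\<beta> * \<bar>lf d u' x\<bar>) * \<bar>lf d a x\<bar> * \<bar>lf d b x\<bar> * \<bar>lf d c x\<bar> * \<bar>lf d e x\<bar>) \<and>
    (\<integral>x. exp (\<beta> * \<bar>lf d u x\<bar>) * exp (\<beta> * \<bar>lf d u' x\<bar>) * \<bar>lf d a x\<bar> * \<bar>lf d b x\<bar> * \<bar>lf d c x\<bar> * \<bar>lf d e x\<bar> \<partial>gauss d)
     \<le> MC \<beta> R2 2 4 * (sqrt (nrm2 d a) * sqrt (nrm2 d b) * sqrt (nrm2 d c) * sqrt (nrm2 d e))"
  using M2[OF assms, where n=4 and as="sel a b c e"] by (simp add: prod4 sel_def mult_ac)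

lemma lf_0: "lf d (\<lambda>_. 0) x = 0" unfolding lf_def by simp
lemma nrm2_0: "nrm2 d (\<lambda>_. 0) = 0" unfolding nrm2_def by simp

lemma sum_int_bd:
  fixes f :: "'i \<Rightarrow> 'a \<Rightarrow> real"
  assumes "finite J" "\<And>j. j \<in> J \<Longrightarrow> integrable M (f j) \<and> (\<integral>x. f j x \<partial>M) \<le> b j"
  shows "integrable M (\<lambda>x. \<Sum>j\<in>J. f j x) \<and> (\<integral>x. (\<Sum>j\<in>J. f j x) \<partial>M) \<le> (\<Sum>j\<in>J. b j)"
proof
  show "integrable M (\<lambda>x. \<Sum>j\<in>J. f j x)" using assms by (intro Bochner_Integration.integrable_sum) auto
  have "(\<integral>x. (\<Sum>j\<in>J. f j x) \<partial>M) = (\<Sum>j\<in>J. (\<integral>x. f j x \<partial>M))"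
    using assms by (intro Bochner_Integration.integral_sum) auto
  also have "\<dots> \<le> (\<Sum>j\<in>J. b j)" using assms by (intro sum_mono) auto
  finally show "(\<integral>x. (\<Sum>j\<in>J. f j x) \<partial>M) \<le> (\<Sum>j\<in>J. b j)" .
qed

lemma cmult_int_bd:
  fixes f :: "'a \<Rightarrow> real"
  assumes "0 \<le> c" "integrable M f \<and> (\<integral>x. f x \<partial>M) \<le> b"
  shows "integrable M (\<lambda>x. c * f x) \<and> (\<integral>x. c * f x \<partial>M) \<le> c * b"
  using assms by (auto intro: mult_left_mono)

lemma avg1_eq: "(1 / real K) * (\<Sum>j<K. F j) = (1 / real K) * (\<Sum>j<K. F j)" ..

lemma avg2_eq: "((1 / real K) * (\<Sum>j<K. F j)) * ((1 / real K) * (\<Sum>k<K. G k :: real))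
   = (1 / real K) ^ 2 * (\<Sum>j<K. \<Sum>k<K. F j * G k)"
  by (simp add: sum_product power2_eq_square mult_ac)

lemma sum3_eq: "(\<Sum>j<K. \<Sum>k<K. F j * G k) * (\<Sum>l<K. H l) = (\<Sum>j<K. \<Sum>k<K. \<Sum>l<K. F j * G k * (H l :: real))"
  by (simp only: sum_distrib_right) (simp only: sum_distrib_left)

lemma sum4_eq: "(\<Sum>j<K. \<Sum>k<K. \<Sum>l<K. F j * G k * H l) * (\<Sum>m<K. P m) = (\<Sum>j<K. \<Sum>k<K. \<Sum>l<K. \<Sum>m<K. F j * G k * H l * (P m :: real))"
  by (simp only: sum_distrib_right) (simp only: sum_distrib_left)

lemma avg3_eq: "((1 / real K) * (\<Sum>j<K. F j)) * ((1 / real K) * (\<Sum>k<K. G k)) * ((1 / real K) * (\<Sum>l<K. H l :: real))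
   = (1 / real K) ^ 3 * (\<Sum>j<K. \<Sum>k<K. \<Sum>l<K. F j * G k * H l)"
proof -
  have "((1 / real K) * (\<Sum>j<K. F j)) * ((1 / real K) * (\<Sum>k<K. G k)) * ((1 / real K) * (\<Sum>l<K. H l :: real))
    = (1 / real K) ^ 2 * (\<Sum>j<K. \<Sum>k<K. F j * G k) * ((1 / real K) * (\<Sum>l<K. H l))"
    by (simp only: avg2_eq)
  also have "\<dots> = (1 / real K) ^ 3 * ((\<Sum>j<K. \<Sum>k<K. F j * G k) * (\<Sum>l<K. H l))"
    by (simp add: power3_eq_cube power2_eq_square mult_ac)
  finally show ?thesis unfolding sum3_eq .
qed

lemma avg4_eq: "((1 / real K) * (\<Sum>j<K. F j)) * ((1 / real K) * (\<Sum>k<K. G k)) * ((1 / real K) * (\<Sum>l<K. H l))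
     * ((1 / real K) * (\<Sum>m<K. P m :: real))
   = (1 / real K) ^ 4 * (\<Sum>j<K. \<Sum>k<K. \<Sum>l<K. \<Sum>m<K. F j * G k * H l * P m)"
proof -
  have "((1 / real K) * (\<Sum>j<K. F j)) * ((1 / real K) * (\<Sum>k<K. G k)) * ((1 / real K) * (\<Sum>l<K. H l))
     * ((1 / real K) * (\<Sum>m<K. P m :: real))
    = (1 / real K) ^ 3 * (\<Sum>j<K. \<Sum>k<K. \<Sum>l<K. F j * G k * H l) * ((1 / real K) * (\<Sum>m<K. P m))"
    by (simp only: avg3_eq)
  also have "\<dots> = (1 / real K) ^ 4 * ((\<Sum>j<K. \<Sum>k<K. \<Sum>l<K. F j * G k * H l) * (\<Sum>m<K. P m))"
    by (simp add: eval_nat_numeral mult_ac)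
  finally show ?thesis unfolding sum4_eq .
qed


context gs begin

definition EE :: "nat \<Rightarrow> ('p \<Rightarrow> real) \<Rightarrow> ('p \<Rightarrow> real) \<Rightarrow> (nat \<Rightarrow> real) \<Rightarrow> real" where
  "EE m \<theta> e x = (1 / real K) * (\<Sum>j<K. 4 ^ m * (exp (real m * \<bar>sk j \<theta> x\<bar>) * exp (real m * \<bar>sk j e x\<bar>)))"
definition AA where "AA z x = (1 / real K) * (\<Sum>k<K. \<bar>sk k z x\<bar>)"
definition BB where "BB z v x = (1 / real K) * (\<Sum>k<K. \<bar>sk k z x\<bar> * \<bar>sk k v x\<bar>)"
definition CC where "CC z v w x = (1 / real K) * (\<Sum>k<K. \<bar>sk k z x\<bar> * \<bar>sk k v x\<bar> * \<bar>sk k w x\<bar>)"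

lemma EE_nn: "0 \<le> EE m \<theta> e x" unfolding EE_def by (intro mult_nonneg_nonneg sum_nonneg) auto
lemma AA_nn: "0 \<le> AA z x" unfolding AA_def by (intro mult_nonneg_nonneg sum_nonneg) auto
lemma BB_nn: "0 \<le> BB z v x" unfolding BB_def by (intro mult_nonneg_nonneg sum_nonneg) auto
lemma CC_nn: "0 \<le> CC z v w x" unfolding CC_def by (intro mult_nonneg_nonneg sum_nonneg) auto

lemma Qf_shift:
  assumes "\<bar>t\<bar> \<le> 1"
  shows "(Qf (gH (\<lambda>r. \<theta> r + t * e r) x)) ^ m \<le> EE m \<theta> e x"
proof -
  have "(Qf (gH (\<lambda>r. \<theta> r + t * e r) x)) ^ m \<le>
     (1 / real K) * (\<Sum>j<K. 4 ^ m * exp (real m * \<bar>sk j (\<lambda>r. \<theta> r + t * e r) x\<bar>))"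
    by (rule Qf_pow)
  also have "\<dots> \<le> EE m \<theta> e x"
    unfolding EE_def using Kpos exp_shift[OF assms]
    by (intro mult_left_mono sum_mono) auto
  finally show ?thesis .
qed

lemma Qf_shift1:
  assumes "\<bar>t\<bar> \<le> 1"
  shows "Qf (gH (\<lambda>r. \<theta> r + t * e r) x) \<le> EE 1 \<theta> e x"
  using Qf_shift[OF assms, of \<theta> e x 1] by simp

lemma DH_bd': "\<bar>DH \<theta> z x\<bar> \<le> AA z x" unfolding AA_def by (rule DH_bd)
lemma D2H_bd': "\<bar>D2H \<theta> z v x\<bar> \<le> BB z v x" unfolding BB_def by (rule D2H_bd)
lemma D3H_bd': "\<bar>D3H \<theta> z v w x\<bar> \<le> 3 * CC z v w x" unfolding CC_def by (rule D3H_bd)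

lemma L0_bd:
  assumes "0 \<le> a" "a \<le> 1" "\<bar>t\<bar> \<le> 1"
  shows "\<bar>L0 a (\<lambda>r. \<theta> r + t * e r) x\<bar> \<le> EE 1 \<theta> e x"
  unfolding L0_def using Lf_bd[OF assms(1,2) gH_bds] Qf_shift1[OF assms(3)] by (rule order_trans)

lemma L1_bd:
  assumes "0 \<le> a" "a \<le> 1" "\<bar>t\<bar> \<le> 1"
  shows "\<bar>L1 a (\<lambda>r. \<theta> r + t * e r) z x\<bar> \<le> EE 1 \<theta> e x * AA z x"
proof -
  let ?h = "gH (\<lambda>r. \<theta> r + t * e r) x"
  have "\<bar>P1 a ?h\<bar> \<le> EE 1 \<theta> e x" using P1_bd[OF assms(1,2) gH_bds] Qf_shift1[OF assms(3)] by (rule order_trans)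
  moreover have "\<bar>DH (\<lambda>r. \<theta> r + t * e r) z x\<bar> \<le> AA z x" by (rule DH_bd')
  ultimately show ?thesis unfolding L1_def abs_mult by (intro mult_mono) (auto simp: EE_nn)
qed

lemma L2_bd:
  assumes "0 \<le> a" "a \<le> 1" "\<bar>t\<bar> \<le> 1"
  shows "\<bar>L2 a (\<lambda>r. \<theta> r + t * e r) z v x\<bar> \<le> EE 2 \<theta> e x * AA z x * AA v x + EE 1 \<theta> e x * BB z v x"
proof -
  let ?t = "\<lambda>r. \<theta> r + t * e r"
  let ?h = "gH ?t x"
  have p2: "\<bar>P2 a ?h\<bar> \<le> EE 2 \<theta> e x" using P2_bd[OF assms(1,2) gH_bds] Qf_shift[OF assms(3), of \<theta> e x 2] by (rule order_trans)
  have p1: "\<bar>P1 a ?h\<bar> \<le> EE 1 \<theta> e x" using P1_bd[OF assms(1,2) gH_bds] Qf_shift1[OF assms(3)] by (rule order_trans)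
  have a: "\<bar>P2 a ?h * DH ?t z x * DH ?t v x\<bar> \<le> EE 2 \<theta> e x * AA z x * AA v x"
    unfolding abs_mult using p2 DH_bd'[of ?t z x] DH_bd'[of ?t v x]
    by (intro mult_mono) (auto simp: EE_nn AA_nn)
  have b: "\<bar>P1 a ?h * D2H ?t z v x\<bar> \<le> EE 1 \<theta> e x * BB z v x"
    unfolding abs_mult using p1 D2H_bd'[of ?t z v x]
    by (intro mult_mono) (auto simp: EE_nn BB_nn)
  show ?thesis unfolding L2_def using a b abs_triangle_ineq order_trans add_mono by fastforce
qed

lemma L3_bd:
  assumes "\<bar>t\<bar> \<le> 1"
  shows "\<bar>L3 (gH \<theta> x) (\<lambda>r. \<theta> r + t * e r) z v e x\<bar> \<le>
     2 * EE 3 \<theta> e x * AA z x * AA v x * AA e x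
     + EE 2 \<theta> e x * (BB z e x * AA v x + AA z x * BB v e x + AA e x * BB z v x)
     + EE 1 \<theta> e x * AA e x * (3 * CC z v e x)"
proof -
  let ?t = "\<lambda>r. \<theta> r + t * e r"
  let ?h = "gH ?t x"
  let ?a = "gH \<theta> x"
  have a01: "0 \<le> ?a" "?a \<le> 1" using gH_bds[of \<theta> x] by auto
  have p3: "\<bar>P3 ?a ?h\<bar> \<le> 2 * EE 3 \<theta> e x"
    using P3_bd[OF a01 gH_bds(1)[of ?t x] gH_bds(2)[of ?t x]] Qf_shift[OF assms, of \<theta> e x 3] by linarith
  have p2: "\<bar>P2 ?a ?h\<bar> \<le> EE 2 \<theta> e x" using P2_bd[OF a01 gH_bds] Qf_shift[OF assms, of \<theta> e x 2] by (rule order_trans)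
  have hd: "\<bar>?h - ?a\<bar> \<le> AA e x"
  proof -
    have "\<bar>?h - ?a\<bar> \<le> (1 / real K) * (\<Sum>k<K. \<bar>sk k ?t x - sk k \<theta> x\<bar>)" by (rule gH_lip)
    also have "\<dots> \<le> AA e x" unfolding AA_def sk_lin using assms Kpos
      by (intro mult_left_mono sum_mono) (auto simp: abs_mult mult_left_le_one_le)
    finally show ?thesis .
  qed
  have p1: "\<bar>P1 ?a ?h\<bar> \<le> EE 1 \<theta> e x * AA e x"
  proof -
    have "\<bar>P1 ?a ?h\<bar> \<le> \<bar>?h - ?a\<bar> * Qf ?h" by (rule P1_bd2[OF a01 gH_bds])
    also have "\<dots> \<le> AA e x * EE 1 \<theta> e x"
      using hd Qf_shift1[OF assms, of \<theta> e x] Qf_pos[OF gH_bds(1)[of ?t x] gH_bds(2)[of ?t x]] by (intro mult_mono) auto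
    finally show ?thesis by (simp add: mult_ac)
  qed
  have dz: "\<bar>DH ?t z x\<bar> \<le> AA z x" "\<bar>DH ?t v x\<bar> \<le> AA v x" "\<bar>DH ?t e x\<bar> \<le> AA e x" by (rule DH_bd')+
  have d2: "\<bar>D2H ?t z e x\<bar> \<le> BB z e x" "\<bar>D2H ?t v e x\<bar> \<le> BB v e x" "\<bar>D2H ?t z v x\<bar> \<le> BB z v x" by (rule D2H_bd')+
  have d3: "\<bar>D3H ?t z v e x\<bar> \<le> 3 * CC z v e x" by (rule D3H_bd')
  have nn: "0 \<le> AA z x" "0 \<le> AA v x" "0 \<le> AA e x" "0 \<le> BB z e x" "0 \<le> BB v e x" "0 \<le> BB z v x"
    "0 \<le> EE 1 \<theta> e x" "0 \<le> EE 2 \<theta> e x" "0 \<le> EE 3 \<theta> e x"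
    by (rule AA_nn BB_nn EE_nn)+
  have T1: "\<bar>P3 ?a ?h * DH ?t z x * DH ?t v x * DH ?t e x\<bar> \<le> 2 * EE 3 \<theta> e x * AA z x * AA v x * AA e x"
    unfolding abs_mult using p3 dz nn by (intro mult_mono) auto
  have T2: "\<bar>P2 ?a ?h * (D2H ?t z e x * DH ?t v x + DH ?t z x * D2H ?t v e x + DH ?t e x * D2H ?t z v x)\<bar>
     \<le> EE 2 \<theta> e x * (BB z e x * AA v x + AA z x * BB v e x + AA e x * BB z v x)"
  proof -
    have "\<bar>D2H ?t z e x * DH ?t v x + DH ?t z x * D2H ?t v e x + DH ?t e x * D2H ?t z v x\<bar>
      \<le> BB z e x * AA v x + AA z x * BB v e x + AA e x * BB z v x"
    proof -
      have "\<bar>D2H ?t z e x * DH ?t v x\<bar> \<le> BB z e x * AA v x" unfolding abs_mult using d2 dz nn by (intro mult_mono) auto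
      moreover have "\<bar>DH ?t z x * D2H ?t v e x\<bar> \<le> AA z x * BB v e x" unfolding abs_mult using d2 dz nn by (intro mult_mono) auto
      moreover have "\<bar>DH ?t e x * D2H ?t z v x\<bar> \<le> AA e x * BB z v x" unfolding abs_mult using d2 dz nn by (intro mult_mono) auto
      ultimately show ?thesis by (smt (verit) abs_triangle_ineq)
    qed
    then show ?thesis unfolding abs_mult[of "P2 ?a ?h"] using p2 nn by (intro mult_mono) auto
  qed
  have T3: "\<bar>P1 ?a ?h * D3H ?t z v e x\<bar> \<le> EE 1 \<theta> e x * AA e x * (3 * CC z v e x)"
    unfolding abs_mult using p1 d3 nn by (intro mult_mono) (auto simp: abs_mult)
  show ?thesis unfolding L3_def using T1 T2 T3 by (smt (verit) abs_triangle_ineq)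
qed

end


lemma add_int_bd:
  fixes f g :: "'a \<Rightarrow> real"
  assumes "integrable M f \<and> (\<integral>x. f x \<partial>M) \<le> a" "integrable M g \<and> (\<integral>x. g x \<partial>M) \<le> b"
  shows "integrable M (\<lambda>x. f x + g x) \<and> (\<integral>x. f x + g x \<partial>M) \<le> a + b"
  using assms by auto

context gs begin

definition nv where "nv k z = sqrt (nrm2 d (cv k z))"
definition S1 where "S1 z = (\<Sum>k<K. nv k z)"
definition S2 where "S2 z v = (\<Sum>k<K. nv k z * nv k v)"
definition S3 where "S3 z v w = (\<Sum>k<K. nv k z * nv k v * nv k w)"

definition RB where "RB \<theta> e R2 \<longleftrightarrow> (\<forall>j<K. nrm2 d (cv j \<theta>) \<le> R2 \<and> nrm2 d (cv j e) \<le> R2)"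

lemma RB_ex: "RB \<theta> e (\<Sum>j<K. nrm2 d (cv j \<theta>) + nrm2 d (cv j e))"
  unfolding RB_def
proof (intro allI impI conjI)
  fix j assume j: "j < K"
  have "nrm2 d (cv j \<theta>) + nrm2 d (cv j e) \<le> (\<Sum>j<K. nrm2 d (cv j \<theta>) + nrm2 d (cv j e))"
    by (rule member_le_sum) (use j in \<open>auto intro: add_nonneg_nonneg\<close>)
  then show "nrm2 d (cv j \<theta>) \<le> (\<Sum>j<K. nrm2 d (cv j \<theta>) + nrm2 d (cv j e))"
    "nrm2 d (cv j e) \<le> (\<Sum>j<K. nrm2 d (cv j \<theta>) + nrm2 d (cv j e))"
    using nrm2_nonneg[of d "cv j \<theta>"] nrm2_nonneg[of d "cv j e"] by linarith+
qed

lemma nv_nn: "0 \<le> nv k z" unfolding nv_def by simp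

lemma int_E:
  assumes R: "RB \<theta> e R2"
  shows "integrable (gauss d) (\<lambda>x. EE m \<theta> e x) \<and>
     (\<integral>x. EE m \<theta> e x \<partial>gauss d) \<le> 4 ^ m * MC (real m) R2 2 0"
proof -
  have eq: "EE m \<theta> e x = (1 / real K) * (\<Sum>j<K. 4 ^ m * (exp (real m * \<bar>lf d (cv j \<theta>) x\<bar>) * exp (real m * \<bar>lf d (cv j e) x\<bar>)))" for x
    unfolding EE_def sk_def ..
  have "integrable (gauss d) (\<lambda>x. (1 / real K) * (\<Sum>j<K. 4 ^ m * (exp (real m * \<bar>lf d (cv j \<theta>) x\<bar>) * exp (real m * \<bar>lf d (cv j e) x\<bar>)))) \<and>
     (\<integral>x. (1 / real K) * (\<Sum>j<K. 4 ^ m * (exp (real m * \<bar>lf d (cv j \<theta>) x\<bar>) * exp (real m * \<bar>lf d (cv j e) x\<bar>))) \<partial>gauss d)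
     \<le> (1 / real K) * (\<Sum>j<K. 4 ^ m * MC (real m) R2 2 0)"
    apply (rule cmult_int_bd, simp)
    apply (rule sum_int_bd, simp)
    apply (rule cmult_int_bd, simp)
    apply (rule M2_0) using R unfolding RB_def by auto
  moreover have "(1 / real K) * (\<Sum>j<K. 4 ^ m * MC (real m) R2 2 0) = 4 ^ m * MC (real m) R2 2 0"
    using Kpos by simp
  ultimately show ?thesis unfolding eq by simp
qed

lemma int_EA:
  assumes R: "RB \<theta> e R2"
  shows "integrable (gauss d) (\<lambda>x. EE m \<theta> e x * AA z x) \<and>
     (\<integral>x. EE m \<theta> e x * AA z x \<partial>gauss d) \<le> 4 ^ m * MC (real m) R2 2 1 * S1 z / real K"
proof -
  have eq: "EE m \<theta> e x * AA z x = (1 / real K) ^ 2 * (\<Sum>j<K. \<Sum>k<K. 4 ^ m * (exp (real m * \<bar>lf d (cv j \<theta>) x\<bar>) * exp (real m * \<bar>lf d (cv j e) x\<bar>) * \<bar>lf d (cv k z) x\<bar>))" for x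
    unfolding EE_def AA_def avg2_eq sk_def by (simp add: mult_ac)
  have "integrable (gauss d) (\<lambda>x. (1 / real K) ^ 2 * (\<Sum>j<K. \<Sum>k<K. 4 ^ m * (exp (real m * \<bar>lf d (cv j \<theta>) x\<bar>) * exp (real m * \<bar>lf d (cv j e) x\<bar>) * \<bar>lf d (cv k z) x\<bar>))) \<and>
     (\<integral>x. (1 / real K) ^ 2 * (\<Sum>j<K. \<Sum>k<K. 4 ^ m * (exp (real m * \<bar>lf d (cv j \<theta>) x\<bar>) * exp (real m * \<bar>lf d (cv j e) x\<bar>) * \<bar>lf d (cv k z) x\<bar>)) \<partial>gauss d)
     \<le> (1 / real K) ^ 2 * (\<Sum>j<K. \<Sum>k<K. 4 ^ m * (MC (real m) R2 2 1 * nv k z))"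
    apply (rule cmult_int_bd, simp)
    apply (rule sum_int_bd, simp)
    apply (rule sum_int_bd, simp)
    apply (rule cmult_int_bd, simp)
    unfolding nv_def apply (rule M2_1) using R unfolding RB_def by auto
  moreover have "(1 / real K) ^ 2 * (\<Sum>j<K. \<Sum>k<K. 4 ^ m * (MC (real m) R2 2 1 * nv k z)) = 4 ^ m * MC (real m) R2 2 1 * S1 z / real K"
  proof -
    have A: "(\<Sum>j<K. \<Sum>k<K. 4 ^ m * (MC (real m) R2 2 1 * nv k z)) = real K * (4 ^ m * (MC (real m) R2 2 1 * (\<Sum>k<K. nv k z)))"
      by (simp add: sum_distrib_left)
    have B: "(\<Sum>k<K. nv k z) = S1 z"
      unfolding S1_def by (simp add: sum_distrib_left sum_distrib_right mult_ac)
    have "(\<Sum>j<K. \<Sum>k<K. 4 ^ m * (MC (real m) R2 2 1 * nv k z)) = real K * (4 ^ m * MC (real m) R2 2 1 * S1 z)"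
      unfolding A B by (simp add: mult_ac)
    then show ?thesis using Kpos by (simp add: power2_eq_square)
  qed
  ultimately show ?thesis unfolding eq by simp
qed

lemma int_EAA:
  assumes R: "RB \<theta> e R2"
  shows "integrable (gauss d) (\<lambda>x. EE m \<theta> e x * AA z x * AA v x) \<and>
     (\<integral>x. EE m \<theta> e x * AA z x * AA v x \<partial>gauss d) \<le> 4 ^ m * MC (real m) R2 2 2 * S1 z * S1 v / real K ^ 2"
proof -
  have eq: "EE m \<theta> e x * AA z x * AA v x = (1 / real K) ^ 3 * (\<Sum>j<K. \<Sum>k<K. \<Sum>l<K. 4 ^ m * (exp (real m * \<bar>lf d (cv j \<theta>) x\<bar>) * exp (real m * \<bar>lf d (cv j e) x\<bar>) * \<bar>lf d (cv k z) x\<bar> * \<bar>lf d (cv l v) x\<bar>))" for x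
    unfolding EE_def AA_def avg3_eq sk_def by (simp add: mult_ac)
  have "integrable (gauss d) (\<lambda>x. (1 / real K) ^ 3 * (\<Sum>j<K. \<Sum>k<K. \<Sum>l<K. 4 ^ m * (exp (real m * \<bar>lf d (cv j \<theta>) x\<bar>) * exp (real m * \<bar>lf d (cv j e) x\<bar>) * \<bar>lf d (cv k z) x\<bar> * \<bar>lf d (cv l v) x\<bar>))) \<and>
     (\<integral>x. (1 / real K) ^ 3 * (\<Sum>j<K. \<Sum>k<K. \<Sum>l<K. 4 ^ m * (exp (real m * \<bar>lf d (cv j \<theta>) x\<bar>) * exp (real m * \<bar>lf d (cv j e) x\<bar>) * \<bar>lf d (cv k z) x\<bar> * \<bar>lf d (cv l v) x\<bar>)) \<partial>gauss d) \<le> (1 / real K) ^ 3 * (\<Sum>j<K. \<Sum>k<K. \<Sum>l<K. 4 ^ m * (MC (real m) R2 2 2 * (nv k z * nv l v)))"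
    apply (rule cmult_int_bd, simp)
    apply (rule sum_int_bd, simp)
    apply (rule sum_int_bd, simp)
    apply (rule sum_int_bd, simp)
    apply (rule cmult_int_bd, simp)
    unfolding nv_def apply (rule M2_2) using R unfolding RB_def by auto
  moreover have "(1 / real K) ^ 3 * (\<Sum>j<K. \<Sum>k<K. \<Sum>l<K. 4 ^ m * (MC (real m) R2 2 2 * (nv k z * nv l v))) = 4 ^ m * MC (real m) R2 2 2 * S1 z * S1 v / real K ^ 2"
  proof -
    have A: "(\<Sum>j<K. \<Sum>k<K. \<Sum>l<K. 4 ^ m * (MC (real m) R2 2 2 * (nv k z * nv l v))) = real K * (4 ^ m * (MC (real m) R2 2 2 * (\<Sum>k<K. \<Sum>l<K. (nv k z * nv l v))))"
      by (simp add: sum_distrib_left)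
    have B: "(\<Sum>k<K. \<Sum>l<K. (nv k z * nv l v)) = S1 z * S1 v"
      unfolding S1_def by (simp add: sum_distrib_left sum_distrib_right mult_ac)
    have "(\<Sum>j<K. \<Sum>k<K. \<Sum>l<K. 4 ^ m * (MC (real m) R2 2 2 * (nv k z * nv l v))) = real K * (4 ^ m * MC (real m) R2 2 2 * S1 z * S1 v)"
      unfolding A B by (simp add: mult_ac)
    then show ?thesis using Kpos by (simp add: power2_eq_square power3_eq_cube eval_nat_numeral)
  qed
  ultimately show ?thesis unfolding eq by simp
qed

lemma int_EB:
  assumes R: "RB \<theta> e R2"
  shows "integrable (gauss d) (\<lambda>x. EE m \<theta> e x * BB z v x) \<and>
     (\<integral>x. EE m \<theta> e x * BB z v x \<partial>gauss d) \<le> 4 ^ m * MC (real m) R2 2 2 * S2 z v / real K"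
proof -
  have eq: "EE m \<theta> e x * BB z v x = (1 / real K) ^ 2 * (\<Sum>j<K. \<Sum>k<K. 4 ^ m * (exp (real m * \<bar>lf d (cv j \<theta>) x\<bar>) * exp (real m * \<bar>lf d (cv j e) x\<bar>) * \<bar>lf d (cv k z) x\<bar> * \<bar>lf d (cv k v) x\<bar>))" for x
    unfolding EE_def BB_def avg2_eq sk_def by (simp add: mult_ac)
  have "integrable (gauss d) (\<lambda>x. (1 / real K) ^ 2 * (\<Sum>j<K. \<Sum>k<K. 4 ^ m * (exp (real m * \<bar>lf d (cv j \<theta>) x\<bar>) * exp (real m * \<bar>lf d (cv j e) x\<bar>) * \<bar>lf d (cv k z) x\<bar> * \<bar>lf d (cv k v) x\<bar>))) \<and>
     (\<integral>x. (1 / real K) ^ 2 * (\<Sum>j<K. \<Sum>k<K. 4 ^ m * (exp (real m * \<bar>lf d (cv j \<theta>) x\<bar>) * exp (real m * \<bar>lf d (cv j e) x\<bar>) * \<bar>lf d (cv k z) x\<bar> * \<bar>lf d (cv k v) x\<bar>)) \<partial>gauss d) \<le> (1 / real K) ^ 2 * (\<Sum>j<K. \<Sum>k<K. 4 ^ m * (MC (real m) R2 2 2 * (nv k z * nv k v)))"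
    apply (rule cmult_int_bd, simp)
    apply (rule sum_int_bd, simp)
    apply (rule sum_int_bd, simp)
    apply (rule cmult_int_bd, simp)
    unfolding nv_def apply (rule M2_2) using R unfolding RB_def by auto
  moreover have "(1 / real K) ^ 2 * (\<Sum>j<K. \<Sum>k<K. 4 ^ m * (MC (real m) R2 2 2 * (nv k z * nv k v))) = 4 ^ m * MC (real m) R2 2 2 * S2 z v / real K"
  proof -
    have A: "(\<Sum>j<K. \<Sum>k<K. 4 ^ m * (MC (real m) R2 2 2 * (nv k z * nv k v))) = real K * (4 ^ m * (MC (real m) R2 2 2 * (\<Sum>k<K. (nv k z * nv k v))))"
      by (simp add: sum_distrib_left)
    have B: "(\<Sum>k<K. (nv k z * nv k v)) = S2 z v"
      unfolding S2_def by (simp add: sum_distrib_left sum_distrib_right mult_ac)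
    have "(\<Sum>j<K. \<Sum>k<K. 4 ^ m * (MC (real m) R2 2 2 * (nv k z * nv k v))) = real K * (4 ^ m * MC (real m) R2 2 2 * S2 z v)"
      unfolding A B by (simp add: mult_ac)
    then show ?thesis using Kpos by (simp add: power2_eq_square power3_eq_cube eval_nat_numeral)
  qed
  ultimately show ?thesis unfolding eq by simp
qed

lemma int_EAAA:
  assumes R: "RB \<theta> e R2"
  shows "integrable (gauss d) (\<lambda>x. EE m \<theta> e x * AA z x * AA v x * AA w x) \<and>
     (\<integral>x. EE m \<theta> e x * AA z x * AA v x * AA w x \<partial>gauss d) \<le> 4 ^ m * MC (real m) R2 2 3 * S1 z * S1 v * S1 w / real K ^ 3"
proof -
  have eq: "EE m \<theta> e x * AA z x * AA v x * AA w x = (1 / real K) ^ 4 * (\<Sum>j<K. \<Sum>k<K. \<Sum>l<K. \<Sum>n<K. 4 ^ m * (exp (real m * \<bar>lf d (cv j \<theta>) x\<bar>) * exp (real m * \<bar>lf d (cv j e) x\<bar>) * \<bar>lf d (cv k z) x\<bar> * \<bar>lf d (cv l v) x\<bar> * \<bar>lf d (cv n w) x\<bar>))" for x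
    unfolding EE_def AA_def avg4_eq sk_def by (simp add: mult_ac)
  have "integrable (gauss d) (\<lambda>x. (1 / real K) ^ 4 * (\<Sum>j<K. \<Sum>k<K. \<Sum>l<K. \<Sum>n<K. 4 ^ m * (exp (real m * \<bar>lf d (cv j \<theta>) x\<bar>) * exp (real m * \<bar>lf d (cv j e) x\<bar>) * \<bar>lf d (cv k z) x\<bar> * \<bar>lf d (cv l v) x\<bar> * \<bar>lf d (cv n w) x\<bar>))) \<and>
     (\<integral>x. (1 / real K) ^ 4 * (\<Sum>j<K. \<Sum>k<K. \<Sum>l<K. \<Sum>n<K. 4 ^ m * (exp (real m * \<bar>lf d (cv j \<theta>) x\<bar>) * exp (real m * \<bar>lf d (cv j e) x\<bar>) * \<bar>lf d (cv k z) x\<bar> * \<bar>lf d (cv l v) x\<bar> * \<bar>lf d (cv n w) x\<bar>)) \<partial>gauss d) \<le> (1 / real K) ^ 4 * (\<Sum>j<K. \<Sum>k<K. \<Sum>l<K. \<Sum>n<K. 4 ^ m * (MC (real m) R2 2 3 * (nv k z * nv l v * nv n w)))"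
    apply (rule cmult_int_bd, simp)
    apply (rule sum_int_bd, simp)
    apply (rule sum_int_bd, simp)
    apply (rule sum_int_bd, simp)
    apply (rule sum_int_bd, simp)
    apply (rule cmult_int_bd, simp)
    unfolding nv_def apply (rule M2_3) using R unfolding RB_def by auto
  moreover have "(1 / real K) ^ 4 * (\<Sum>j<K. \<Sum>k<K. \<Sum>l<K. \<Sum>n<K. 4 ^ m * (MC (real m) R2 2 3 * (nv k z * nv l v * nv n w))) = 4 ^ m * MC (real m) R2 2 3 * S1 z * S1 v * S1 w / real K ^ 3"
  proof -
    have A: "(\<Sum>j<K. \<Sum>k<K. \<Sum>l<K. \<Sum>n<K. 4 ^ m * (MC (real m) R2 2 3 * (nv k z * nv l v * nv n w))) = real K * (4 ^ m * (MC (real m) R2 2 3 * (\<Sum>k<K. \<Sum>l<K. \<Sum>n<K. (nv k z * nv l v * nv n w))))"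
      by (simp add: sum_distrib_left)
    have B: "(\<Sum>k<K. \<Sum>l<K. \<Sum>n<K. (nv k z * nv l v * nv n w)) = S1 z * S1 v * S1 w"
      unfolding S1_def by (simp add: sum_distrib_left sum_distrib_right mult_ac)
    have "(\<Sum>j<K. \<Sum>k<K. \<Sum>l<K. \<Sum>n<K. 4 ^ m * (MC (real m) R2 2 3 * (nv k z * nv l v * nv n w))) = real K * (4 ^ m * MC (real m) R2 2 3 * S1 z * S1 v * S1 w)"
      unfolding A B by (simp add: mult_ac)
    then show ?thesis using Kpos by (simp add: power2_eq_square power3_eq_cube eval_nat_numeral)
  qed
  ultimately show ?thesis unfolding eq by simp
qed

lemma int_EBA:
  assumes R: "RB \<theta> e R2"
  shows "integrable (gauss d) (\<lambda>x. EE m \<theta> e x * BB z w x * AA v x) \<and>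
     (\<integral>x. EE m \<theta> e x * BB z w x * AA v x \<partial>gauss d) \<le> 4 ^ m * MC (real m) R2 2 3 * S2 z w * S1 v / real K ^ 2"
proof -
  have eq: "EE m \<theta> e x * BB z w x * AA v x = (1 / real K) ^ 3 * (\<Sum>j<K. \<Sum>k<K. \<Sum>l<K. 4 ^ m * (exp (real m * \<bar>lf d (cv j \<theta>) x\<bar>) * exp (real m * \<bar>lf d (cv j e) x\<bar>) * \<bar>lf d (cv k z) x\<bar> * \<bar>lf d (cv k w) x\<bar> * \<bar>lf d (cv l v) x\<bar>))" for x
    unfolding EE_def AA_def BB_def avg3_eq sk_def by (simp add: mult_ac)
  have "integrable (gauss d) (\<lambda>x. (1 / real K) ^ 3 * (\<Sum>j<K. \<Sum>k<K. \<Sum>l<K. 4 ^ m * (exp (real m * \<bar>lf d (cv j \<theta>) x\<bar>) * exp (real m * \<bar>lf d (cv j e) x\<bar>) * \<bar>lf d (cv k z) x\<bar> * \<bar>lf d (cv k w) x\<bar> * \<bar>lf d (cv l v) x\<bar>))) \<and>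
     (\<integral>x. (1 / real K) ^ 3 * (\<Sum>j<K. \<Sum>k<K. \<Sum>l<K. 4 ^ m * (exp (real m * \<bar>lf d (cv j \<theta>) x\<bar>) * exp (real m * \<bar>lf d (cv j e) x\<bar>) * \<bar>lf d (cv k z) x\<bar> * \<bar>lf d (cv k w) x\<bar> * \<bar>lf d (cv l v) x\<bar>)) \<partial>gauss d) \<le> (1 / real K) ^ 3 * (\<Sum>j<K. \<Sum>k<K. \<Sum>l<K. 4 ^ m * (MC (real m) R2 2 3 * (nv k z * nv k w * nv l v)))"
    apply (rule cmult_int_bd, simp)
    apply (rule sum_int_bd, simp)
    apply (rule sum_int_bd, simp)
    apply (rule sum_int_bd, simp)
    apply (rule cmult_int_bd, simp)
    unfolding nv_def apply (rule M2_3) using R unfolding RB_def by auto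
  moreover have "(1 / real K) ^ 3 * (\<Sum>j<K. \<Sum>k<K. \<Sum>l<K. 4 ^ m * (MC (real m) R2 2 3 * (nv k z * nv k w * nv l v))) = 4 ^ m * MC (real m) R2 2 3 * S2 z w * S1 v / real K ^ 2"
  proof -
    have A: "(\<Sum>j<K. \<Sum>k<K. \<Sum>l<K. 4 ^ m * (MC (real m) R2 2 3 * (nv k z * nv k w * nv l v))) = real K * (4 ^ m * (MC (real m) R2 2 3 * (\<Sum>k<K. \<Sum>l<K. (nv k z * nv k w * nv l v))))"
      by (simp add: sum_distrib_left)
    have B: "(\<Sum>k<K. \<Sum>l<K. (nv k z * nv k w * nv l v)) = S2 z w * S1 v"
      unfolding S1_def S2_def by (simp add: sum_distrib_left sum_distrib_right mult_ac)
    have "(\<Sum>j<K. \<Sum>k<K. \<Sum>l<K. 4 ^ m * (MC (real m) R2 2 3 * (nv k z * nv k w * nv l v))) = real K * (4 ^ m * MC (real m) R2 2 3 * S2 z w * S1 v)"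
      unfolding A B by (simp add: mult_ac)
    then show ?thesis using Kpos by (simp add: power2_eq_square power3_eq_cube eval_nat_numeral)
  qed
  ultimately show ?thesis unfolding eq by simp
qed

lemma int_EAC:
  assumes R: "RB \<theta> e R2"
  shows "integrable (gauss d) (\<lambda>x. EE m \<theta> e x * AA w x * CC z v u x) \<and>
     (\<integral>x. EE m \<theta> e x * AA w x * CC z v u x \<partial>gauss d) \<le> 4 ^ m * MC (real m) R2 2 4 * S1 w * S3 z v u / real K ^ 2"
proof -
  have eq: "EE m \<theta> e x * AA w x * CC z v u x = (1 / real K) ^ 3 * (\<Sum>j<K. \<Sum>k<K. \<Sum>l<K. 4 ^ m * (exp (real m * \<bar>lf d (cv j \<theta>) x\<bar>) * exp (real m * \<bar>lf d (cv j e) x\<bar>) * \<bar>lf d (cv k w) x\<bar> * \<bar>lf d (cv l z) x\<bar> * \<bar>lf d (cv l v) x\<bar> * \<bar>lf d (cv l u) x\<bar>))" for x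
    unfolding EE_def AA_def CC_def avg3_eq sk_def by (simp add: mult_ac)
  have "integrable (gauss d) (\<lambda>x. (1 / real K) ^ 3 * (\<Sum>j<K. \<Sum>k<K. \<Sum>l<K. 4 ^ m * (exp (real m * \<bar>lf d (cv j \<theta>) x\<bar>) * exp (real m * \<bar>lf d (cv j e) x\<bar>) * \<bar>lf d (cv k w) x\<bar> * \<bar>lf d (cv l z) x\<bar> * \<bar>lf d (cv l v) x\<bar> * \<bar>lf d (cv l u) x\<bar>))) \<and>
     (\<integral>x. (1 / real K) ^ 3 * (\<Sum>j<K. \<Sum>k<K. \<Sum>l<K. 4 ^ m * (exp (real m * \<bar>lf d (cv j \<theta>) x\<bar>) * exp (real m * \<bar>lf d (cv j e) x\<bar>) * \<bar>lf d (cv k w) x\<bar> * \<bar>lf d (cv l z) x\<bar> * \<bar>lf d (cv l v) x\<bar> * \<bar>lf d (cv l u) x\<bar>)) \<partial>gauss d) \<le> (1 / real K) ^ 3 * (\<Sum>j<K. \<Sum>k<K. \<Sum>l<K. 4 ^ m * (MC (real m) R2 2 4 * (nv k w * nv l z * nv l v * nv l u)))"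
    apply (rule cmult_int_bd, simp)
    apply (rule sum_int_bd, simp)
    apply (rule sum_int_bd, simp)
    apply (rule sum_int_bd, simp)
    apply (rule cmult_int_bd, simp)
    unfolding nv_def apply (rule M2_4) using R unfolding RB_def by auto
  moreover have "(1 / real K) ^ 3 * (\<Sum>j<K. \<Sum>k<K. \<Sum>l<K. 4 ^ m * (MC (real m) R2 2 4 * (nv k w * nv l z * nv l v * nv l u))) = 4 ^ m * MC (real m) R2 2 4 * S1 w * S3 z v u / real K ^ 2"
  proof -
    have A: "(\<Sum>j<K. \<Sum>k<K. \<Sum>l<K. 4 ^ m * (MC (real m) R2 2 4 * (nv k w * nv l z * nv l v * nv l u))) = real K * (4 ^ m * (MC (real m) R2 2 4 * (\<Sum>k<K. \<Sum>l<K. (nv k w * nv l z * nv l v * nv l u))))"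
      by (simp add: sum_distrib_left)
    have B: "(\<Sum>k<K. \<Sum>l<K. (nv k w * nv l z * nv l v * nv l u)) = S1 w * S3 z v u"
      unfolding S1_def S3_def by (simp only: sum_distrib_right) (simp add: sum_distrib_left mult_ac)
    have "(\<Sum>j<K. \<Sum>k<K. \<Sum>l<K. 4 ^ m * (MC (real m) R2 2 4 * (nv k w * nv l z * nv l v * nv l u))) = real K * (4 ^ m * MC (real m) R2 2 4 * S1 w * S3 z v u)"
      unfolding A B by (simp add: mult_ac)
    then show ?thesis using Kpos by (simp add: power2_eq_square power3_eq_cube eval_nat_numeral)
  qed
  ultimately show ?thesis unfolding eq by simp
qed

end


context gs begin

lemma DH_meas[measurable]: "(\<lambda>x. DH \<theta> z x) \<in> borel_measurable (gauss d)" unfolding DH_def by measurable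
lemma D2H_meas[measurable]: "(\<lambda>x. D2H \<theta> z v x) \<in> borel_measurable (gauss d)" unfolding D2H_def by measurable
lemma EE_meas[measurable]: "(\<lambda>x. EE m \<theta> e x) \<in> borel_measurable (gauss d)" unfolding EE_def by measurable
lemma AA_meas[measurable]: "(\<lambda>x. AA z x) \<in> borel_measurable (gauss d)" unfolding AA_def by measurable
lemma BB_meas[measurable]: "(\<lambda>x. BB z v x) \<in> borel_measurable (gauss d)" unfolding BB_def by measurable
lemma L0_meas[measurable]: "(\<lambda>x. L0 (gH \<theta>s x) \<theta> x) \<in> borel_measurable (gauss d)" unfolding L0_def by measurable
lemma L1_meas[measurable]: "(\<lambda>x. L1 (gH \<theta>s x) \<theta> z x) \<in> borel_measurable (gauss d)" unfolding L1_def by measurable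
lemma L2_meas[measurable]: "(\<lambda>x. L2 (gH \<theta>s x) \<theta> z v x) \<in> borel_measurable (gauss d)" unfolding L2_def by measurable

lemma a01: "0 \<le> gH \<theta>s x" "gH \<theta>s x \<le> 1" using gH_bds[of \<theta>s x] by auto

lemma derA:
  "((\<lambda>t. \<integral>x. L0 (gH \<theta>s x) (\<lambda>r. \<theta> r + t * e r) x \<partial>gauss d) has_real_derivative
     (\<integral>x. L1 (gH \<theta>s x) \<theta> e x \<partial>gauss d)) (at 0)"
proof -
  obtain R2 where R: "RB \<theta> e R2" using RB_ex by blast
  have "((\<lambda>t. \<integral>x. L0 (gH \<theta>s x) (\<lambda>r. \<theta> r + t * e r) x \<partial>gauss d) has_real_derivative
     (\<integral>x. L1 (gH \<theta>s x) (\<lambda>r. \<theta> r + 0 * e r) e x \<partial>gauss d)) (at 0)"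
  proof (rule leibniz[where G="\<lambda>x. EE 1 \<theta> e x * AA e x"])
    show "integrable (gauss d) (\<lambda>x. L0 (gH \<theta>s x) (\<lambda>r. \<theta> r + t * e r) x)" if "\<bar>t\<bar> < 1" for t
    proof (rule Bochner_Integration.integrable_bound)
      show "integrable (gauss d) (\<lambda>x. EE 1 \<theta> e x)" using int_E[OF R] by blast
      show "AE x in gauss d. norm (L0 (gH \<theta>s x) (\<lambda>r. \<theta> r + t * e r) x) \<le> norm (EE 1 \<theta> e x)"
        using L0_bd[OF a01] that EE_nn by (auto intro!: AE_I2 simp: abs_of_nonneg)
    qed measurable
    show "(\<lambda>x. L1 (gH \<theta>s x) (\<lambda>r. \<theta> r + 0 * e r) e x) \<in> borel_measurable (gauss d)" by measurable
    show "integrable (gauss d) (\<lambda>x. EE 1 \<theta> e x * AA e x)" using int_EA[OF R] by blast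
    show "((\<lambda>t. L0 (gH \<theta>s x) (\<lambda>r. \<theta> r + t * e r) x) has_real_derivative
        L1 (gH \<theta>s x) (\<lambda>r. \<theta> r + t * e r) e x) (at t)" for t x
      by (rule der_L0)
    show "\<bar>L1 (gH \<theta>s x) (\<lambda>r. \<theta> r + t * e r) e x\<bar> \<le> EE 1 \<theta> e x * AA e x" if "\<bar>t\<bar> < 1" for t x
      using L1_bd[OF a01] that by auto
  qed
  then show ?thesis by simp
qed

lemma derB:
  "((\<lambda>s. \<integral>x. L1 (gH \<theta>s x) (\<lambda>r. \<theta> r + s * eq r) ep x \<partial>gauss d) has_real_derivative
     (\<integral>x. L2 (gH \<theta>s x) \<theta> ep eq x \<partial>gauss d)) (at 0)"
proof -
  obtain R2 where R: "RB \<theta> eq R2" using RB_ex by blast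
  have "((\<lambda>s. \<integral>x. L1 (gH \<theta>s x) (\<lambda>r. \<theta> r + s * eq r) ep x \<partial>gauss d) has_real_derivative
     (\<integral>x. L2 (gH \<theta>s x) (\<lambda>r. \<theta> r + 0 * eq r) ep eq x \<partial>gauss d)) (at 0)"
  proof (rule leibniz[where G="\<lambda>x. EE 2 \<theta> eq x * AA ep x * AA eq x + EE 1 \<theta> eq x * BB ep eq x"])
    show "integrable (gauss d) (\<lambda>x. L1 (gH \<theta>s x) (\<lambda>r. \<theta> r + t * eq r) ep x)" if "\<bar>t\<bar> < 1" for t
    proof (rule Bochner_Integration.integrable_bound)
      show "integrable (gauss d) (\<lambda>x. EE 1 \<theta> eq x * AA ep x)" using int_EA[OF R] by blast
      show "AE x in gauss d. norm (L1 (gH \<theta>s x) (\<lambda>r. \<theta> r + t * eq r) ep x) \<le> norm (EE 1 \<theta> eq x * AA ep x)"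
        using L1_bd[OF a01] that EE_nn AA_nn by (auto intro!: AE_I2 simp: abs_of_nonneg)
    qed measurable
    show "(\<lambda>x. L2 (gH \<theta>s x) (\<lambda>r. \<theta> r + 0 * eq r) ep eq x) \<in> borel_measurable (gauss d)" by measurable
    show "integrable (gauss d) (\<lambda>x. EE 2 \<theta> eq x * AA ep x * AA eq x + EE 1 \<theta> eq x * BB ep eq x)"
      by (intro Bochner_Integration.integrable_add) (use int_EAA[OF R] int_EB[OF R] in blast)+
    show "((\<lambda>t. L1 (gH \<theta>s x) (\<lambda>r. \<theta> r + t * eq r) ep x) has_real_derivative
        L2 (gH \<theta>s x) (\<lambda>r. \<theta> r + t * eq r) ep eq x) (at t)" for t x
      by (rule der_L1)
    show "\<bar>L2 (gH \<theta>s x) (\<lambda>r. \<theta> r + t * eq r) ep eq x\<bar> \<le> EE 2 \<theta> eq x * AA ep x * AA eq x + EE 1 \<theta> eq x * BB ep eq x"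
      if "\<bar>t\<bar> < 1" for t x
      using L2_bd[OF a01] that by auto
  qed
  then show ?thesis by simp
qed

lemma risk_eq: "pop_risk d (gH \<theta>s) (gH \<theta>) = (\<integral>x. L0 (gH \<theta>s x) \<theta> x \<partial>gauss d)"
  unfolding pop_risk_def L0_def xent_Lf ..

lemma hess:
  "hessian (\<lambda>\<theta>. pop_risk d (gH \<theta>s) (gH \<theta>)) W p q = (\<integral>x. L2 (gH \<theta>s x) W (coord p) (coord q) x \<partial>gauss d)"
proof -
  have inner: "deriv (\<lambda>t. pop_risk d (gH \<theta>s) (gH (\<lambda>r. W r + s * coord q r + t * coord p r))) 0
      = (\<integral>x. L1 (gH \<theta>s x) (\<lambda>r. W r + s * coord q r) (coord p) x \<partial>gauss d)" for s
    unfolding risk_eq by (rule DERIV_imp_deriv[OF derA[of \<theta>s "\<lambda>r. W r + s * coord q r" "coord p"]])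
  show ?thesis
    unfolding hessian_def inner by (rule DERIV_imp_deriv[OF derB])
qed

end


lemma MC_nn: "0 \<le> MC b R ne na" unfolding MC_def by (auto intro!: add_nonneg_nonneg mult_nonneg_nonneg)

context gs begin

lemma cv_coord: assumes "p \<in> I" shows "cv k (coord p) = Mt k p"
proof
  fix i
  have "cv k (coord p) i = (\<Sum>r\<in>I. if r = p then Mt k r i else 0)"
    unfolding cv_def coord_def by (rule sum.cong) auto
  also have "\<dots> = Mt k p i" using assms finI by (simp add: sum.delta)
  finally show "cv k (coord p) i = Mt k p i" .
qed

lemma sk_expand: "sk k z x = (\<Sum>p\<in>I. z p * sk k (coord p) x)"
proof -
  have "sk k z x = (\<Sum>i<d. \<Sum>p\<in>I. z p * Mt k p i * x i)"
    by (simp add: sk_def lf_def cv_def sum_distrib_right)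
  also have "\<dots> = (\<Sum>p\<in>I. \<Sum>i<d. z p * Mt k p i * x i)" by (rule sum.swap)
  also have "\<dots> = (\<Sum>p\<in>I. z p * sk k (coord p) x)"
    by (rule sum.cong[OF refl]) (simp add: cv_coord sk_def lf_def sum_distrib_left mult_ac)
  finally show ?thesis .
qed

lemma DH_lin: "DH \<theta> z x = (\<Sum>p\<in>I. z p * DH \<theta> (coord p) x)"
proof -
  have "DH \<theta> z x = (1 / real K) * (\<Sum>k<K. \<Sum>p\<in>I. z p * (sd1 (sk k \<theta> x) * sk k (coord p) x))"
    unfolding DH_def by (subst sk_expand) (simp add: sum_distrib_left mult_ac)
  also have "\<dots> = (\<Sum>p\<in>I. z p * DH \<theta> (coord p) x)"
    unfolding DH_def by (subst sum.swap) (simp add: sum_distrib_left mult_ac)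
  finally show ?thesis .
qed

lemma D2H_lin: "D2H \<theta> z v x = (\<Sum>p\<in>I. \<Sum>q\<in>I. z p * v q * D2H \<theta> (coord p) (coord q) x)"
proof -
  have "D2H \<theta> z v x = (1 / real K) * (\<Sum>k<K. \<Sum>p\<in>I. \<Sum>q\<in>I. z p * v q * (sd2 (sk k \<theta> x) * sk k (coord p) x * sk k (coord q) x))"
    unfolding D2H_def
    by (subst (1 2) sk_expand) (simp add: sum_distrib_left sum_distrib_right mult_ac)
  also have "\<dots> = (1 / real K) * (\<Sum>p\<in>I. \<Sum>k<K. \<Sum>q\<in>I. z p * v q * (sd2 (sk k \<theta> x) * sk k (coord p) x * sk k (coord q) x))"
    by (subst sum.swap) simp
  also have "\<dots> = (1 / real K) * (\<Sum>p\<in>I. \<Sum>q\<in>I. \<Sum>k<K. z p * v q * (sd2 (sk k \<theta> x) * sk k (coord p) x * sk k (coord q) x))"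
    by (subst (2) sum.swap) simp
  also have "\<dots> = (\<Sum>p\<in>I. \<Sum>q\<in>I. z p * v q * D2H \<theta> (coord p) (coord q) x)"
    unfolding D2H_def by (simp add: sum_distrib_left mult_ac)
  finally show ?thesis .
qed

lemma L2_lin: "L2 a \<theta> z v x = (\<Sum>p\<in>I. \<Sum>q\<in>I. z p * v q * L2 a \<theta> (coord p) (coord q) x)"
proof -
  have "L2 a \<theta> z v x = P2 a (gH \<theta> x) * (\<Sum>p\<in>I. z p * DH \<theta> (coord p) x) * (\<Sum>q\<in>I. v q * DH \<theta> (coord q) x)
     + P1 a (gH \<theta> x) * (\<Sum>p\<in>I. \<Sum>q\<in>I. z p * v q * D2H \<theta> (coord p) (coord q) x)"
    unfolding L2_def by (subst (1 2) DH_lin, subst D2H_lin) simp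
  also have "\<dots> = (\<Sum>p\<in>I. \<Sum>q\<in>I. z p * v q * L2 a \<theta> (coord p) (coord q) x)"
    unfolding L2_def by (simp add: sum_distrib_left sum_distrib_right sum.distrib distrib_left mult_ac)
  finally show ?thesis .
qed

lemma L2_int: "integrable (gauss d) (\<lambda>x. L2 (gH \<theta>s x) \<theta> z v x)"
proof -
  obtain R2 where R: "RB \<theta> (\<lambda>_. 0) R2" using RB_ex by blast
  show ?thesis
  proof (rule Bochner_Integration.integrable_bound)
    show "integrable (gauss d) (\<lambda>x. EE 2 \<theta> (\<lambda>_. 0) x * AA z x * AA v x + EE 1 \<theta> (\<lambda>_. 0) x * BB z v x)"
      by (intro Bochner_Integration.integrable_add) (use int_EAA[OF R] int_EB[OF R] in blast)+
    show "AE x in gauss d. norm (L2 (gH \<theta>s x) \<theta> z v x) \<le> norm (EE 2 \<theta> (\<lambda>_. 0) x * AA z x * AA v x + EE 1 \<theta> (\<lambda>_. 0) x * BB z v x)"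
    proof (rule AE_I2)
      fix x
      have "\<bar>L2 (gH \<theta>s x) (\<lambda>r. \<theta> r + 0 * (\<lambda>_. 0) r) z v x\<bar> \<le> EE 2 \<theta> (\<lambda>_. 0) x * AA z x * AA v x + EE 1 \<theta> (\<lambda>_. 0) x * BB z v x"
        by (rule L2_bd[OF a01]) simp
      moreover have "0 \<le> EE 2 \<theta> (\<lambda>_. 0) x * AA z x * AA v x + EE 1 \<theta> (\<lambda>_. 0) x * BB z v x"
        using EE_nn AA_nn BB_nn by (intro add_nonneg_nonneg mult_nonneg_nonneg) auto
      ultimately show "norm (L2 (gH \<theta>s x) \<theta> z v x) \<le> norm (EE 2 \<theta> (\<lambda>_. 0) x * AA z x * AA v x + EE 1 \<theta> (\<lambda>_. 0) x * BB z v x)"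
        by simp
    qed
  qed measurable
qed

lemma hess_bilin:
  "(\<Sum>p\<in>I. z p * (\<Sum>q\<in>I. (hessian (\<lambda>\<theta>. pop_risk d (gH \<theta>s) (gH \<theta>)) W p q
        - hessian (\<lambda>\<theta>. pop_risk d (gH \<theta>s) (gH \<theta>)) W' p q) * v q))
   = (\<integral>x. L2 (gH \<theta>s x) W z v x \<partial>gauss d) - (\<integral>x. L2 (gH \<theta>s x) W' z v x \<partial>gauss d)"
proof -
  have i: "\<And>\<theta> p q. integrable (gauss d) (\<lambda>x. L2 (gH \<theta>s x) \<theta> (coord p) (coord q) x)" by (rule L2_int)
  have "(\<integral>x. L2 (gH \<theta>s x) \<theta> z v x \<partial>gauss d) = (\<Sum>p\<in>I. \<Sum>q\<in>I. z p * v q * (\<integral>x. L2 (gH \<theta>s x) \<theta> (coord p) (coord q) x \<partial>gauss d))" for \<theta>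
    by (subst L2_lin) (simp add: Bochner_Integration.integral_sum i)
  then show ?thesis unfolding hess
    by (simp add: sum_distrib_left sum_subtractf[symmetric] right_diff_distrib left_diff_distrib mult_ac)
qed

definition Cg :: real where "Cg = 128 * MC 3 1 2 3 + 16 * MC 2 1 2 3 + 12 * MC 1 1 2 4"

lemma S_nn: "0 \<le> S1 z" "0 \<le> S2 z v" "0 \<le> S3 z v w"
  unfolding S1_def S2_def S3_def using nv_nn by (auto intro!: sum_nonneg mult_nonneg_nonneg)

lemma diff_bd:
  assumes R: "RB \<theta>s \<Delta> 1"
  shows "\<bar>(\<integral>x. L2 (gH \<theta>s x) (\<lambda>r. \<theta>s r + \<Delta> r) z v x \<partial>gauss d) - (\<integral>x. L2 (gH \<theta>s x) \<theta>s z v x \<partial>gauss d)\<bar>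
     \<le> Cg * (S1 z * S1 v * S1 \<Delta> / real K ^ 3
         + (S2 z \<Delta> * S1 v + S2 v \<Delta> * S1 z + S2 z v * S1 \<Delta>) / real K ^ 2
         + S1 \<Delta> * S3 z v \<Delta> / real K ^ 2)"
proof -
  define B where "B x = 2 * (EE 3 \<theta>s \<Delta> x * AA z x * AA v x * AA \<Delta> x)
     + EE 2 \<theta>s \<Delta> x * BB z \<Delta> x * AA v x + EE 2 \<theta>s \<Delta> x * BB v \<Delta> x * AA z x
     + EE 2 \<theta>s \<Delta> x * BB z v x * AA \<Delta> x + 3 * (EE 1 \<theta>s \<Delta> x * AA \<Delta> x * CC z v \<Delta> x)" for x
  have pw: "\<bar>L2 (gH \<theta>s x) (\<lambda>r. \<theta>s r + \<Delta> r) z v x - L2 (gH \<theta>s x) \<theta>s z v x\<bar> \<le> B x" for x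
  proof -
    have "\<bar>(\<lambda>t. L2 (gH \<theta>s x) (\<lambda>r. \<theta>s r + t * \<Delta> r) z v x) 1 - (\<lambda>t. L2 (gH \<theta>s x) (\<lambda>r. \<theta>s r + t * \<Delta> r) z v x) 0\<bar> \<le> B x * \<bar>1\<bar>"
    proof (rule mvt_abs[where f'="\<lambda>t. L3 (gH \<theta>s x) (\<lambda>r. \<theta>s r + t * \<Delta> r) z v \<Delta> x"])
      show "((\<lambda>t. L2 (gH \<theta>s x) (\<lambda>r. \<theta>s r + t * \<Delta> r) z v x) has_real_derivative L3 (gH \<theta>s x) (\<lambda>r. \<theta>s r + s * \<Delta> r) z v \<Delta> x) (at s)" for s
        by (rule der_L2)
      show "\<bar>L3 (gH \<theta>s x) (\<lambda>r. \<theta>s r + s * \<Delta> r) z v \<Delta> x\<bar> \<le> B x" if "\<bar>s\<bar> \<le> \<bar>1\<bar>" for s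
        using L3_bd[of s \<theta>s x \<Delta> z v] that unfolding B_def by (simp add: algebra_simps)
    qed
    then show ?thesis by simp
  qed
  have T1: "integrable (gauss d) (\<lambda>x. 2 * (EE 3 \<theta>s \<Delta> x * AA z x * AA v x * AA \<Delta> x)) \<and>
     (\<integral>x. 2 * (EE 3 \<theta>s \<Delta> x * AA z x * AA v x * AA \<Delta> x) \<partial>gauss d) \<le> 2 * (4 ^ 3 * MC (real 3) 1 2 3 * S1 z * S1 v * S1 \<Delta> / real K ^ 3)"
    by (rule cmult_int_bd) (simp, rule int_EAAA[OF R])
  have T2: "integrable (gauss d) (\<lambda>x. EE 2 \<theta>s \<Delta> x * BB z \<Delta> x * AA v x) \<and>
     (\<integral>x. EE 2 \<theta>s \<Delta> x * BB z \<Delta> x * AA v x \<partial>gauss d) \<le> 4 ^ 2 * MC (real 2) 1 2 3 * S2 z \<Delta> * S1 v / real K ^ 2"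
    by (rule int_EBA[OF R])
  have T3: "integrable (gauss d) (\<lambda>x. EE 2 \<theta>s \<Delta> x * BB v \<Delta> x * AA z x) \<and>
     (\<integral>x. EE 2 \<theta>s \<Delta> x * BB v \<Delta> x * AA z x \<partial>gauss d) \<le> 4 ^ 2 * MC (real 2) 1 2 3 * S2 v \<Delta> * S1 z / real K ^ 2"
    by (rule int_EBA[OF R])
  have T4: "integrable (gauss d) (\<lambda>x. EE 2 \<theta>s \<Delta> x * BB z v x * AA \<Delta> x) \<and>
     (\<integral>x. EE 2 \<theta>s \<Delta> x * BB z v x * AA \<Delta> x \<partial>gauss d) \<le> 4 ^ 2 * MC (real 2) 1 2 3 * S2 z v * S1 \<Delta> / real K ^ 2"
    by (rule int_EBA[OF R])
  have T5: "integrable (gauss d) (\<lambda>x. 3 * (EE 1 \<theta>s \<Delta> x * AA \<Delta> x * CC z v \<Delta> x)) \<and>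
     (\<integral>x. 3 * (EE 1 \<theta>s \<Delta> x * AA \<Delta> x * CC z v \<Delta> x) \<partial>gauss d) \<le> 3 * (4 ^ 1 * MC (real 1) 1 2 4 * S1 \<Delta> * S3 z v \<Delta> / real K ^ 2)"
    by (rule cmult_int_bd) (simp, rule int_EAC[OF R])
  have IB: "integrable (gauss d) B \<and> (\<integral>x. B x \<partial>gauss d) \<le>
      2 * (4 ^ 3 * MC (real 3) 1 2 3 * S1 z * S1 v * S1 \<Delta> / real K ^ 3)
      + 4 ^ 2 * MC (real 2) 1 2 3 * S2 z \<Delta> * S1 v / real K ^ 2
      + 4 ^ 2 * MC (real 2) 1 2 3 * S2 v \<Delta> * S1 z / real K ^ 2
      + 4 ^ 2 * MC (real 2) 1 2 3 * S2 z v * S1 \<Delta> / real K ^ 2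
      + 3 * (4 ^ 1 * MC (real 1) 1 2 4 * S1 \<Delta> * S3 z v \<Delta> / real K ^ 2)"
    unfolding B_def[abs_def] by (intro add_int_bd T1 T2 T3 T4 T5)
  have i1: "integrable (gauss d) (\<lambda>x. L2 (gH \<theta>s x) (\<lambda>r. \<theta>s r + \<Delta> r) z v x)" by (rule L2_int)
  have i0: "integrable (gauss d) (\<lambda>x. L2 (gH \<theta>s x) \<theta>s z v x)" by (rule L2_int)
  have "\<bar>(\<integral>x. L2 (gH \<theta>s x) (\<lambda>r. \<theta>s r + \<Delta> r) z v x \<partial>gauss d) - (\<integral>x. L2 (gH \<theta>s x) \<theta>s z v x \<partial>gauss d)\<bar>
      = \<bar>\<integral>x. L2 (gH \<theta>s x) (\<lambda>r. \<theta>s r + \<Delta> r) z v x - L2 (gH \<theta>s x) \<theta>s z v x \<partial>gauss d\<bar>"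
    using i1 i0 by simp
  also have "\<dots> \<le> (\<integral>x. \<bar>L2 (gH \<theta>s x) (\<lambda>r. \<theta>s r + \<Delta> r) z v x - L2 (gH \<theta>s x) \<theta>s z v x\<bar> \<partial>gauss d)"
    by (rule integral_abs_bound)
  also have "\<dots> \<le> (\<integral>x. B x \<partial>gauss d)"
    by (rule integral_mono') (use IB pw in \<open>auto intro: order_trans[OF abs_ge_zero]\<close>)
  also have "\<dots> \<le> Cg * (S1 z * S1 v * S1 \<Delta> / real K ^ 3
         + (S2 z \<Delta> * S1 v + S2 v \<Delta> * S1 z + S2 z v * S1 \<Delta>) / real K ^ 2
         + S1 \<Delta> * S3 z v \<Delta> / real K ^ 2)"
  proof -
    let ?a = "S1 z * S1 v * S1 \<Delta> / real K ^ 3"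
    let ?b = "(S2 z \<Delta> * S1 v + S2 v \<Delta> * S1 z + S2 z v * S1 \<Delta>) / real K ^ 2"
    let ?c = "S1 \<Delta> * S3 z v \<Delta> / real K ^ 2"
    have nn: "0 \<le> ?a" "0 \<le> ?b" "0 \<le> ?c" using S_nn by (auto intro!: add_nonneg_nonneg mult_nonneg_nonneg divide_nonneg_nonneg)
    have m: "0 \<le> MC 3 1 2 3" "0 \<le> MC 2 1 2 3" "0 \<le> MC 1 1 2 4" by (rule MC_nn)+
    have e: "2 * (4 ^ 3 * MC (real 3) 1 2 3 * S1 z * S1 v * S1 \<Delta> / real K ^ 3)
      + 4 ^ 2 * MC (real 2) 1 2 3 * S2 z \<Delta> * S1 v / real K ^ 2
      + 4 ^ 2 * MC (real 2) 1 2 3 * S2 v \<Delta> * S1 z / real K ^ 2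
      + 4 ^ 2 * MC (real 2) 1 2 3 * S2 z v * S1 \<Delta> / real K ^ 2
      + 3 * (4 ^ 1 * MC (real 1) 1 2 4 * S1 \<Delta> * S3 z v \<Delta> / real K ^ 2)
      = 128 * MC 3 1 2 3 * ?a + 16 * MC 2 1 2 3 * ?b + 12 * MC 1 1 2 4 * ?c"
      by (simp add: add_divide_distrib distrib_left mult_ac)
    have "128 * MC 3 1 2 3 * ?a + 16 * MC 2 1 2 3 * ?b + 12 * MC 1 1 2 4 * ?c \<le> Cg * (?a + ?b + ?c)"
    proof -
      have "128 * MC 3 1 2 3 * ?a \<le> Cg * ?a" unfolding Cg_def using nn m by (intro mult_right_mono) auto
      moreover have "16 * MC 2 1 2 3 * ?b \<le> Cg * ?b" unfolding Cg_def using nn m by (intro mult_right_mono) auto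
      moreover have "12 * MC 1 1 2 4 * ?c \<le> Cg * ?c" unfolding Cg_def using nn m by (intro mult_right_mono) auto
      ultimately show ?thesis by (simp add: distrib_left)
    qed
    then show ?thesis using IB e by linarith
  qed
  finally show ?thesis .
qed

end


lemma spec_norm_le:
  fixes A :: "'a \<Rightarrow> 'a \<Rightarrow> real"
  assumes fin: "finite I" and ne: "I \<noteq> {}" and B0: "0 \<le> B"
    and bd: "\<And>z v. (\<Sum>q\<in>I. (z q)\<^sup>2) = 1 \<Longrightarrow> (\<Sum>q\<in>I. (v q)\<^sup>2) = 1 \<Longrightarrow>
       \<bar>\<Sum>p\<in>I. z p * (\<Sum>q\<in>I. A p q * v q)\<bar> \<le> B"
  shows "spec_norm I A \<le> B"
  unfolding spec_norm_def
proof (rule cSup_least)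
  obtain p0 where p0: "p0 \<in> I" using ne by auto
  have "(\<Sum>q\<in>I. (coord p0 q)\<^sup>2) = (\<Sum>q\<in>I. if q = p0 then 1 else 0)"
    unfolding coord_def by (rule sum.cong) auto
  also have "\<dots> = 1" using fin p0 by simp
  finally show "{sqrt (\<Sum>p\<in>I. (\<Sum>q\<in>I. A p q * v q)\<^sup>2) |v. (\<Sum>q\<in>I. (v q)\<^sup>2) = 1} \<noteq> {}" by blast
next
  fix y assume "y \<in> {sqrt (\<Sum>p\<in>I. (\<Sum>q\<in>I. A p q * v q)\<^sup>2) |v. (\<Sum>q\<in>I. (v q)\<^sup>2) = 1}"
  then obtain v where v: "(\<Sum>q\<in>I. (v q)\<^sup>2) = 1" and y: "y = sqrt (\<Sum>p\<in>I. (\<Sum>q\<in>I. A p q * v q)\<^sup>2)" by blast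
  define w where "w p = (\<Sum>q\<in>I. A p q * v q)" for p
  define N where "N = sqrt (\<Sum>p\<in>I. (w p)\<^sup>2)"
  have N0: "0 \<le> N" unfolding N_def by (auto intro!: sum_nonneg)
  show "y \<le> B"
  proof (cases "N = 0")
    case True then show ?thesis using y B0 unfolding N_def w_def by simp
  next
    case False
    then have Np: "0 < N" using N0 by simp
    have NN: "(\<Sum>p\<in>I. (w p)\<^sup>2) = N\<^sup>2" unfolding N_def by (simp add: sum_nonneg)
    define z where "z p = w p / N" for p
    have "(\<Sum>q\<in>I. (z q)\<^sup>2) = (\<Sum>q\<in>I. (w q)\<^sup>2) / N\<^sup>2"
      unfolding z_def by (simp add: power_divide sum_divide_distrib)
    then have zu: "(\<Sum>q\<in>I. (z q)\<^sup>2) = 1" using NN Np by simp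
    have "(\<Sum>p\<in>I. z p * w p) = (\<Sum>p\<in>I. (w p)\<^sup>2) / N"
      unfolding z_def by (simp add: sum_divide_distrib power2_eq_square)
    also have "\<dots> = N" using NN Np by (simp add: power2_eq_square)
    finally have "N = (\<Sum>p\<in>I. z p * w p)" by simp
    then have "N \<le> B" using bd[OF zu v] unfolding w_def by simp
    then show ?thesis using y unfolding N_def w_def by simp
  qed
qed

context gs begin

definition br where "br z v \<Delta> = S1 z * S1 v * S1 \<Delta> / real K ^ 3
         + (S2 z \<Delta> * S1 v + S2 v \<Delta> * S1 z + S2 z v * S1 \<Delta>) / real K ^ 2
         + S1 \<Delta> * S3 z v \<Delta> / real K ^ 2"

lemma spec_gen:
  assumes R: "RB \<theta>s (\<lambda>r. \<theta> r - \<theta>s r) 1" and ne: "I \<noteq> {}" and B0: "0 \<le> Bd"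
    and bd: "\<And>z v. (\<Sum>q\<in>I. (z q)\<^sup>2) = 1 \<Longrightarrow> (\<Sum>q\<in>I. (v q)\<^sup>2) = 1 \<Longrightarrow> Cg * br z v (\<lambda>r. \<theta> r - \<theta>s r) \<le> Bd"
  shows "spec_norm I (\<lambda>p q. hessian (\<lambda>\<theta>. pop_risk d (gH \<theta>s) (gH \<theta>)) \<theta> p q
                           - hessian (\<lambda>\<theta>. pop_risk d (gH \<theta>s) (gH \<theta>)) \<theta>s p q) \<le> Bd"
proof (rule spec_norm_le[OF finI ne B0])
  fix z v :: "'p \<Rightarrow> real"
  assume zu: "(\<Sum>q\<in>I. (z q)\<^sup>2) = 1" and vu: "(\<Sum>q\<in>I. (v q)\<^sup>2) = 1"
  have e: "(\<lambda>r. \<theta>s r + (\<theta> r - \<theta>s r)) = \<theta>" by auto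
  have "\<bar>\<Sum>p\<in>I. z p * (\<Sum>q\<in>I. (hessian (\<lambda>\<theta>. pop_risk d (gH \<theta>s) (gH \<theta>)) \<theta> p q
                           - hessian (\<lambda>\<theta>. pop_risk d (gH \<theta>s) (gH \<theta>)) \<theta>s p q) * v q)\<bar>
     = \<bar>(\<integral>x. L2 (gH \<theta>s x) (\<lambda>r. \<theta>s r + (\<theta> r - \<theta>s r)) z v x \<partial>gauss d) - (\<integral>x. L2 (gH \<theta>s x) \<theta>s z v x \<partial>gauss d)\<bar>"
    unfolding hess_bilin e ..
  also have "\<dots> \<le> Cg * br z v (\<lambda>r. \<theta> r - \<theta>s r)" unfolding br_def by (rule diff_bd[OF R])
  also have "\<dots> \<le> Bd" by (rule bd[OF zu vu])
  finally show "\<bar>\<Sum>p\<in>I. z p * (\<Sum>q\<in>I. (hessian (\<lambda>\<theta>. pop_risk d (gH \<theta>s) (gH \<theta>)) \<theta> p q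
                           - hessian (\<lambda>\<theta>. pop_risk d (gH \<theta>s) (gH \<theta>)) \<theta>s p q) * v q)\<bar> \<le> Bd" .
qed

lemma S1_cs: "S1 z \<le> sqrt (real K) * sqrt (\<Sum>k<K. (nv k z)\<^sup>2)"
proof -
  have "(S1 z)\<^sup>2 \<le> (\<Sum>k<K. (nv k z)\<^sup>2) * real K"
    unfolding S1_def using sum_squared_le_sum_of_squares[of "\<lambda>k. nv k z" "{..<K}"] by simp
  then have "S1 z \<le> sqrt ((\<Sum>k<K. (nv k z)\<^sup>2) * real K)" by (rule real_le_rsqrt)
  then show ?thesis by (simp add: real_sqrt_mult mult_ac)
qed

lemma S2_cs: "S2 z v \<le> sqrt (\<Sum>k<K. (nv k z)\<^sup>2) * sqrt (\<Sum>k<K. (nv k v)\<^sup>2)"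
proof -
  have "(S2 z v)\<^sup>2 \<le> (\<Sum>k<K. (nv k z)\<^sup>2) * (\<Sum>k<K. (nv k v)\<^sup>2)"
    unfolding S2_def by (rule Cauchy_Schwarz_ineq_sum)
  then have "S2 z v \<le> sqrt ((\<Sum>k<K. (nv k z)\<^sup>2) * (\<Sum>k<K. (nv k v)\<^sup>2))" by (rule real_le_rsqrt)
  then show ?thesis by (simp add: real_sqrt_mult)
qed

lemma S3_le: assumes "\<And>k. k < K \<Longrightarrow> nv k w \<le> c" shows "S3 z v w \<le> c * S2 z v"
proof -
  have "S3 z v w \<le> (\<Sum>k<K. nv k z * nv k v * c)"
    unfolding S3_def using assms nv_nn by (intro sum_mono mult_left_mono) (auto intro: mult_nonneg_nonneg)
  then show ?thesis unfolding S2_def by (simp add: sum_distrib_left sum_distrib_right mult_ac)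
qed

lemma br_fcn:
  assumes pars: "\<And>w. (\<Sum>k<K. (nv k w)\<^sup>2) = (\<Sum>p\<in>I. (w p)\<^sup>2)"
    and zu: "(\<Sum>q\<in>I. (z q)\<^sup>2) = 1" and vu: "(\<Sum>q\<in>I. (v q)\<^sup>2) = 1"
    and \<delta>: "\<delta> = sqrt (\<Sum>p\<in>I. (\<Delta> p)\<^sup>2)" "\<delta> \<le> 1"
  shows "br z v \<Delta> \<le> 5 * \<delta> / real K powr (3/2)"
proof -
  define s where "s = sqrt (real K)"
  have s0: "0 < s" unfolding s_def using Kpos by simp
  have sK: "s\<^sup>2 = real K" unfolding s_def by simp
  have d0: "0 \<le> \<delta>" unfolding \<delta> by (simp add: sum_nonneg)
  have nz: "sqrt (\<Sum>k<K. (nv k z)\<^sup>2) = 1" using pars[of z] zu by simp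
  have nvv: "sqrt (\<Sum>k<K. (nv k v)\<^sup>2) = 1" using pars[of v] vu by simp
  have nD: "sqrt (\<Sum>k<K. (nv k \<Delta>)\<^sup>2) = \<delta>" using pars[of \<Delta>] \<delta> by simp
  have a1: "S1 z \<le> s" "S1 v \<le> s" "S1 \<Delta> \<le> s * \<delta>"
    using S1_cs[of z] S1_cs[of v] S1_cs[of \<Delta>] nz nvv nD unfolding s_def by auto
  have a2: "S2 z \<Delta> \<le> \<delta>" "S2 v \<Delta> \<le> \<delta>" "S2 z v \<le> 1"
    using S2_cs[of z \<Delta>] S2_cs[of v \<Delta>] S2_cs[of z v] nz nvv nD by auto
  have nvD: "nv k \<Delta> \<le> \<delta>" if "k < K" for k
  proof -
    have "(nv k \<Delta>)\<^sup>2 \<le> (\<Sum>k<K. (nv k \<Delta>)\<^sup>2)" by (rule member_le_sum) (use that in auto)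
    then have "nv k \<Delta> \<le> sqrt (\<Sum>k<K. (nv k \<Delta>)\<^sup>2)" by (rule real_le_rsqrt)
    then show ?thesis using nD by simp
  qed
  have a3: "S3 z v \<Delta> \<le> \<delta>"
    using S3_le[of \<Delta> \<delta> z v, OF nvD] a2(3) d0 S_nn(2)[of z v] by (smt (verit) mult_left_le)
  have nn: "0 \<le> S1 z" "0 \<le> S1 v" "0 \<le> S1 \<Delta>" "0 \<le> S2 z \<Delta>" "0 \<le> S2 v \<Delta>" "0 \<le> S2 z v" "0 \<le> S3 z v \<Delta>"
    by (rule S_nn)+
  have t1: "S1 z * S1 v * S1 \<Delta> \<le> s * s * (s * \<delta>)"
    using a1 nn s0 d0 by (intro mult_mono) auto
  have t2: "S2 z \<Delta> * S1 v + S2 v \<Delta> * S1 z + S2 z v * S1 \<Delta> \<le> \<delta> * s + \<delta> * s + 1 * (s * \<delta>)"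
    using a1 a2 nn s0 d0 by (intro add_mono mult_mono) auto
  have t3: "S1 \<Delta> * S3 z v \<Delta> \<le> (s * \<delta>) * \<delta>"
    using a1 a3 nn s0 d0 by (intro mult_mono) auto
  have K3: "real K ^ 3 = s ^ 6" unfolding sK[symmetric] by (simp add: power_mult[symmetric])
  have K2: "real K ^ 2 = s ^ 4" unfolding sK[symmetric] by (simp add: power_mult[symmetric])
  have "br z v \<Delta> \<le> s * s * (s * \<delta>) / s ^ 6 + (\<delta> * s + \<delta> * s + 1 * (s * \<delta>)) / s ^ 4 + (s * \<delta>) * \<delta> / s ^ 4"
    unfolding br_def K3 K2
    by (rule add_mono[OF add_mono[OF divide_right_mono[OF t1] divide_right_mono[OF t2]] divide_right_mono[OF t3]]) (use s0 in auto)
  also have "\<dots> = (4 * \<delta> + \<delta> * \<delta>) / s ^ 3" using s0 by (simp add: field_simps eval_nat_numeral)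
  also have "\<dots> \<le> 5 * \<delta> / s ^ 3" using s0 d0 \<delta>(2) by (intro divide_right_mono) (auto simp: mult_left_le)
  also have "s ^ 3 = real K powr (3/2)"
  proof -
    have "real K powr (3/2) = real K powr (1 + 1/2)" by simp
    also have "\<dots> = real K powr 1 * real K powr (1/2)" by (rule powr_add)
    also have "\<dots> = real K * sqrt (real K)" using Kpos by (simp add: powr_half_sqrt)
    also have "\<dots> = s ^ 3" using sK by (simp add: s_def power3_eq_cube)
    finally show ?thesis by simp
  qed
  finally show ?thesis .
qed

lemma br_cnn:
  assumes nvb: "\<And>w k. k < K \<Longrightarrow> nv k w \<le> sqrt (\<Sum>p\<in>I. (w p)\<^sup>2)"
    and zu: "(\<Sum>q\<in>I. (z q)\<^sup>2) = 1" and vu: "(\<Sum>q\<in>I. (v q)\<^sup>2) = 1"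
    and \<delta>: "\<delta> = sqrt (\<Sum>p\<in>I. (\<Delta> p)\<^sup>2)" "\<delta> \<le> 1"
  shows "br z v \<Delta> \<le> 5 * \<delta>"
proof -
  have d0: "0 \<le> \<delta>" unfolding \<delta> by (simp add: sum_nonneg)
  have nb: "nv k z \<le> 1" "nv k v \<le> 1" "nv k \<Delta> \<le> \<delta>" if "k < K" for k
    using nvb[OF that, of z] nvb[OF that, of v] nvb[OF that, of \<Delta>] zu vu \<delta> by auto
  have Kp: "0 < real K" using Kpos by simp
  have a1: "S1 z \<le> real K" "S1 v \<le> real K" "S1 \<Delta> \<le> real K * \<delta>"
  proof -
    show "S1 z \<le> real K" unfolding S1_def using sum_mono[of "{..<K}" "\<lambda>k. nv k z" "\<lambda>_. 1"] nb by auto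
    show "S1 v \<le> real K" unfolding S1_def using sum_mono[of "{..<K}" "\<lambda>k. nv k v" "\<lambda>_. 1"] nb by auto
    show "S1 \<Delta> \<le> real K * \<delta>" unfolding S1_def using sum_mono[of "{..<K}" "\<lambda>k. nv k \<Delta>" "\<lambda>_. \<delta>"] nb by auto
  qed
  have a2: "S2 z \<Delta> \<le> real K * \<delta>" "S2 v \<Delta> \<le> real K * \<delta>" "S2 z v \<le> real K"
  proof -
    have "nv k z * nv k \<Delta> \<le> 1 * \<delta>" "nv k v * nv k \<Delta> \<le> 1 * \<delta>" "nv k z * nv k v \<le> 1 * 1" if "k < K" for k
      by (rule mult_mono, (use nb[OF that] nv_nn d0 in auto)[4])+
    then show "S2 z \<Delta> \<le> real K * \<delta>" "S2 v \<Delta> \<le> real K * \<delta>" "S2 z v \<le> real K"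
      unfolding S2_def using sum_mono[of "{..<K}" "\<lambda>k. nv k z * nv k \<Delta>" "\<lambda>_. \<delta>"]
        sum_mono[of "{..<K}" "\<lambda>k. nv k v * nv k \<Delta>" "\<lambda>_. \<delta>"] sum_mono[of "{..<K}" "\<lambda>k. nv k z * nv k v" "\<lambda>_. 1"]
      by auto
  qed
  have a3: "S3 z v \<Delta> \<le> real K * \<delta>"
  proof -
    have "S3 z v \<Delta> \<le> \<delta> * S2 z v" by (rule S3_le) (use nb in auto)
    also have "\<dots> \<le> \<delta> * real K" using a2 d0 by (intro mult_left_mono) auto
    finally show ?thesis by (simp add: mult_ac)
  qed
  have nn: "0 \<le> S1 z" "0 \<le> S1 v" "0 \<le> S1 \<Delta>" "0 \<le> S2 z \<Delta>" "0 \<le> S2 v \<Delta>" "0 \<le> S2 z v" "0 \<le> S3 z v \<Delta>"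
    by (rule S_nn)+
  have t1: "S1 z * S1 v * S1 \<Delta> \<le> real K * real K * (real K * \<delta>)"
    using a1 nn d0 by (intro mult_mono) auto
  have t2: "S2 z \<Delta> * S1 v + S2 v \<Delta> * S1 z + S2 z v * S1 \<Delta> \<le> (real K * \<delta>) * real K + (real K * \<delta>) * real K + real K * (real K * \<delta>)"
    using a1 a2 nn d0 by (intro add_mono mult_mono) auto
  have t3: "S1 \<Delta> * S3 z v \<Delta> \<le> (real K * \<delta>) * (real K * \<delta>)"
    using a1 a3 nn d0 by (intro mult_mono) auto
  have "br z v \<Delta> \<le> real K * real K * (real K * \<delta>) / real K ^ 3
      + ((real K * \<delta>) * real K + (real K * \<delta>) * real K + real K * (real K * \<delta>)) / real K ^ 2
      + (real K * \<delta>) * (real K * \<delta>) / real K ^ 2"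
    unfolding br_def
    by (rule add_mono[OF add_mono[OF divide_right_mono[OF t1] divide_right_mono[OF t2]] divide_right_mono[OF t3]]) (use Kp in auto)
  also have "\<dots> = 4 * \<delta> + \<delta> * \<delta>" using Kp by (simp add: field_simps eval_nat_numeral)
  also have "\<dots> \<le> 5 * \<delta>" using d0 \<delta>(2) by (auto simp: mult_left_le)
  finally show ?thesis .
qed

lemma Cg_nn: "0 \<le> Cg" unfolding Cg_def using MC_nn by (auto intro!: add_nonneg_nonneg)

end


definition Cg0 :: real where "Cg0 = 128 * MC 3 1 2 3 + 16 * MC 2 1 2 3 + 12 * MC 1 1 2 4"

lemma Cg0_nn: "0 \<le> Cg0" unfolding Cg0_def using MC_nn by (auto intro!: add_nonneg_nonneg)

definition Mf :: "nat \<Rightarrow> nat \<times> nat \<Rightarrow> nat \<Rightarrow> real" where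
  "Mf k p i = (if p = (i, k) then 1 else 0)"

lemma fcn_main:
  fixes Wstar W :: "nat \<times> nat \<Rightarrow> real"
  assumes d1: "d \<ge> 1" and K1: "K \<ge> 1"
    and ws: "\<forall>k<K. sqrt (\<Sum>i<d. (Wstar (i, k))\<^sup>2) \<le> 1"
    and wd: "sqrt (\<Sum>i<d. \<Sum>k<K. (W (i, k) - Wstar (i, k))\<^sup>2) \<le> 0.7"
  shows "spec_norm ({..<d} \<times> {..<K})
              (\<lambda>p q. hessian (fcn_risk d K Wstar) W p q - hessian (fcn_risk d K Wstar) Wstar p q)
            \<le> (5 * Cg0) / (real K powr (3/2)) * sqrt (\<Sum>i<d. \<Sum>k<K. (W (i, k) - Wstar (i, k))\<^sup>2)"
proof -
  let ?I = "{..<d} \<times> {..<K}"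
  interpret F: gs d K ?I Mf by unfold_locales (use K1 in auto)
  have cv: "F.cv k \<theta> i = (if i < d \<and> k < K then \<theta> (i, k) else 0)" for k \<theta> i
  proof -
    have "F.cv k \<theta> i = (\<Sum>p\<in>?I. if p = (i, k) then \<theta> p else 0)"
      unfolding F.cv_def Mf_def by (rule sum.cong) auto
    also have "\<dots> = (if i < d \<and> k < K then \<theta> (i, k) else 0)" by (simp add: sum.delta)
    finally show ?thesis .
  qed
  have sk: "F.sk k \<theta> x = (\<Sum>i<d. \<theta> (i, k) * x i)" if "k < K" for k \<theta> x
    unfolding F.sk_def lf_def cv using that by (intro sum.cong) auto
  have gH: "F.gH \<theta> = fcn_H d K \<theta>" for \<theta>
    unfolding F.gH_def[abs_def] fcn_H_def[abs_def] by (auto simp: sk intro!: sum.cong)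
  have risk: "fcn_risk d K Wstar = (\<lambda>\<theta>. pop_risk d (F.gH Wstar) (F.gH \<theta>))"
    unfolding fcn_risk_def[abs_def] gH ..
  have nrm: "nrm2 d (F.cv k \<theta>) = (\<Sum>i<d. (\<theta> (i, k))\<^sup>2)" if "k < K" for k \<theta>
    unfolding nrm2_def cv using that by (intro sum.cong) auto
  have cart: "(\<Sum>p\<in>?I. (\<theta> p)\<^sup>2) = (\<Sum>i<d. \<Sum>k<K. (\<theta> (i, k))\<^sup>2)" for \<theta> :: "nat \<times> nat \<Rightarrow> real"
    by (simp add: sum.cartesian_product)
  have pars: "(\<Sum>k<K. (F.nv k w)\<^sup>2) = (\<Sum>p\<in>?I. (w p)\<^sup>2)" for w
  proof -
    have "(\<Sum>k<K. (F.nv k w)\<^sup>2) = (\<Sum>k<K. \<Sum>i<d. (w (i, k))\<^sup>2)"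
      unfolding F.nv_def by (intro sum.cong refl) (simp add: nrm sum_nonneg)
    also have "\<dots> = (\<Sum>i<d. \<Sum>k<K. (w (i, k))\<^sup>2)" by (rule sum.swap)
    finally show ?thesis unfolding cart .
  qed
  define \<Delta> where "\<Delta> r = W r - Wstar r" for r
  define \<delta> where "\<delta> = sqrt (\<Sum>i<d. \<Sum>k<K. (W (i, k) - Wstar (i, k))\<^sup>2)"
  have \<delta>I: "\<delta> = sqrt (\<Sum>p\<in>?I. (\<Delta> p)\<^sup>2)" unfolding \<delta>_def \<Delta>_def cart ..
  have d0: "0 \<le> \<delta>" unfolding \<delta>_def by (simp add: sum_nonneg)
  have \<delta>1: "\<delta> \<le> 1" using wd unfolding \<delta>_def by linarith
  have RB: "F.RB Wstar (\<lambda>r. W r - Wstar r) 1"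
    unfolding F.RB_def
  proof (intro allI impI conjI)
    fix j assume j: "j < K"
    have "sqrt (\<Sum>i<d. (Wstar (i, j))\<^sup>2) \<le> 1" using ws j by auto
    then show "nrm2 d (F.cv j Wstar) \<le> 1" unfolding nrm[OF j] by simp
    have "(\<Sum>i<d. (W (i, j) - Wstar (i, j))\<^sup>2) \<le> (\<Sum>i<d. \<Sum>k<K. (W (i, k) - Wstar (i, k))\<^sup>2)"
      by (intro sum_mono member_le_sum[where f="\<lambda>k. (W (_, k) - Wstar (_, k))\<^sup>2"]) (use j in auto)
    also have "\<dots> = \<delta>\<^sup>2" unfolding \<delta>_def by (simp add: sum_nonneg)
    also have "\<dots> \<le> 1" using d0 \<delta>1 by (simp add: power_le_one)
    finally show "nrm2 d (F.cv j (\<lambda>r. W r - Wstar r)) \<le> 1" unfolding nrm[OF j] by simp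
  qed
  have CgE: "F.Cg = Cg0" unfolding F.Cg_def Cg0_def ..
  have "spec_norm ?I (\<lambda>p q. hessian (\<lambda>\<theta>. pop_risk d (F.gH Wstar) (F.gH \<theta>)) W p q
                           - hessian (\<lambda>\<theta>. pop_risk d (F.gH Wstar) (F.gH \<theta>)) Wstar p q)
        \<le> Cg0 * (5 * \<delta> / real K powr (3/2))"
  proof (rule F.spec_gen[OF RB])
    have "(0, 0) \<in> ?I" using d1 K1 by auto
    then show "?I \<noteq> {}" by blast
    show "0 \<le> Cg0 * (5 * \<delta> / real K powr (3/2))" using Cg0_nn d0 by simp
    fix z v :: "nat \<times> nat \<Rightarrow> real"
    assume zu: "(\<Sum>q\<in>?I. (z q)\<^sup>2) = 1" and vu: "(\<Sum>q\<in>?I. (v q)\<^sup>2) = 1"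
    have "F.br z v (\<lambda>r. W r - Wstar r) \<le> 5 * \<delta> / real K powr (3/2)"
      by (rule F.br_fcn[OF pars zu vu]) (use \<delta>I \<delta>1 in \<open>auto simp: \<Delta>_def\<close>)
    then show "F.Cg * F.br z v (\<lambda>r. W r - Wstar r) \<le> Cg0 * (5 * \<delta> / real K powr (3/2))"
      unfolding CgE using Cg0_nn by (rule mult_left_mono)
  qed
  moreover have "Cg0 * (5 * \<delta> / real K powr (3/2)) = (5 * Cg0) / (real K powr (3/2)) * \<delta>" by simp
  ultimately show ?thesis unfolding risk \<delta>_def by (simp add: mult_ac)
qed

definition Mc :: "nat \<Rightarrow> nat \<Rightarrow> nat \<Rightarrow> nat \<Rightarrow> real" where
  "Mc m k j i = (if m * k \<le> i \<and> j = i - m * k then 1 else 0)"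

lemma Mc_sum:
  assumes "j < m" "k < K"
  shows "(\<Sum>i<m * K. g i * Mc m k j i) = g (m * k + j)"
proof -
  have lt: "m * k + j < m * K"
  proof -
    have "m * k + j < m * k + m" using assms by simp
    also have "\<dots> = m * (k + 1)" by simp
    also have "\<dots> \<le> m * K" using assms by (intro mult_le_mono2) auto
    finally show ?thesis .
  qed
  have "(\<Sum>i<m * K. g i * Mc m k j i) = (\<Sum>i<m * K. if i = m * k + j then g i else 0)"
    unfolding Mc_def by (rule sum.cong) auto
  also have "\<dots> = g (m * k + j)" using lt by (simp add: sum.delta)
  finally show ?thesis .
qed

lemma cnn_main:
  fixes wstar w :: "nat \<Rightarrow> real"
  assumes m1: "m \<ge> 1" and K1: "K \<ge> 1"
    and ws: "sqrt (\<Sum>j<m. (wstar j)\<^sup>2) \<le> 1"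
    and wd: "sqrt (\<Sum>j<m. (w j - wstar j)\<^sup>2) \<le> 0.7"
  shows "spec_norm {..<m}
              (\<lambda>p q. hessian (cnn_risk m K wstar) w p q - hessian (cnn_risk m K wstar) wstar p q)
            \<le> (5 * Cg0) * real K * sqrt (\<Sum>j<m. (w j - wstar j)\<^sup>2)"
proof -
  interpret F: gs "m * K" K "{..<m}" "Mc m" by unfold_locales (use K1 in auto)
  have cvc: "F.cv k \<theta> (m * k + j) = \<theta> j" if "j < m" for k j \<theta>
  proof -
    have "F.cv k \<theta> (m * k + j) = (\<Sum>j'<m. if j' = j then \<theta> j' else 0)"
      unfolding F.cv_def Mc_def by (rule sum.cong) auto
    also have "\<dots> = \<theta> j" using that by (simp add: sum.delta)
    finally show ?thesis .
  qed
  have sk: "F.sk k \<theta> x = (\<Sum>j<m. \<theta> j * x (m * k + j))" if "k < K" for k \<theta> x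
  proof -
    have "F.sk k \<theta> x = (\<Sum>j\<in>{..<m}. \<theta> j * F.sk k (coord j) x)" by (rule F.sk_expand)
    also have "\<dots> = (\<Sum>j<m. \<theta> j * x (m * k + j))"
    proof (rule sum.cong[OF refl])
      fix j assume j: "j \<in> {..<m}"
      have "F.sk k (coord j) x = (\<Sum>i<m * K. x i * Mc m k j i)"
        unfolding F.sk_def F.cv_coord[OF j] lf_def by (simp add: mult_ac)
      also have "\<dots> = x (m * k + j)" using Mc_sum[of j m k K x] j that by simp
      finally show "\<theta> j * F.sk k (coord j) x = \<theta> j * x (m * k + j)" by simp
    qed
    finally show ?thesis .
  qed
  have gH: "F.gH \<theta> = cnn_H m K \<theta>" for \<theta>
    unfolding F.gH_def[abs_def] cnn_H_def[abs_def] by (auto simp: sk intro!: sum.cong)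
  have risk: "cnn_risk m K wstar = (\<lambda>\<theta>. pop_risk (m * K) (F.gH wstar) (F.gH \<theta>))"
    unfolding cnn_risk_def[abs_def] gH ..
  have nrm: "nrm2 (m * K) (F.cv k \<theta>) = (\<Sum>j<m. (\<theta> j)\<^sup>2)" if k: "k < K" for k \<theta>
  proof -
    have "nrm2 (m * K) (F.cv k \<theta>) = (\<Sum>i<m * K. F.cv k \<theta> i * (\<Sum>j<m. \<theta> j * Mc m k j i))"
      unfolding nrm2_def F.cv_def by (simp add: power2_eq_square)
    also have "\<dots> = (\<Sum>j<m. \<theta> j * (\<Sum>i<m * K. F.cv k \<theta> i * Mc m k j i))"
      by (simp add: sum_distrib_left sum_distrib_right mult_ac sum.swap[of _ "{..<m}"])
    also have "\<dots> = (\<Sum>j<m. \<theta> j * \<theta> j)"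
      by (rule sum.cong[OF refl]) (use k in \<open>simp add: Mc_sum cvc\<close>)
    finally show ?thesis by (simp add: power2_eq_square)
  qed
  have nvb: "F.nv k \<theta> \<le> sqrt (\<Sum>p\<in>{..<m}. (\<theta> p)\<^sup>2)" if "k < K" for \<theta> k
    unfolding F.nv_def nrm[OF that] by simp
  define \<delta> where "\<delta> = sqrt (\<Sum>j<m. (w j - wstar j)\<^sup>2)"
  have d0: "0 \<le> \<delta>" unfolding \<delta>_def by (simp add: sum_nonneg)
  have \<delta>1: "\<delta> \<le> 1" using wd unfolding \<delta>_def by linarith
  have RB: "F.RB wstar (\<lambda>r. w r - wstar r) 1"
    unfolding F.RB_def
  proof (intro allI impI conjI)
    fix j assume j: "j < K"
    show "nrm2 (m * K) (F.cv j wstar) \<le> 1" unfolding nrm[OF j] using ws by simp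
    have "(\<Sum>i<m. (w i - wstar i)\<^sup>2) = \<delta>\<^sup>2" unfolding \<delta>_def by (simp add: sum_nonneg)
    also have "\<dots> \<le> 1" using d0 \<delta>1 by (simp add: power_le_one)
    finally show "nrm2 (m * K) (F.cv j (\<lambda>r. w r - wstar r)) \<le> 1" unfolding nrm[OF j] by simp
  qed
  have CgE: "F.Cg = Cg0" unfolding F.Cg_def Cg0_def ..
  have "spec_norm {..<m} (\<lambda>p q. hessian (\<lambda>\<theta>. pop_risk (m * K) (F.gH wstar) (F.gH \<theta>)) w p q
                           - hessian (\<lambda>\<theta>. pop_risk (m * K) (F.gH wstar) (F.gH \<theta>)) wstar p q)
        \<le> (5 * Cg0) * real K * \<delta>"
  proof (rule F.spec_gen[OF RB])
    have "0 \<in> {..<m}" using m1 by auto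
    then show "{..<m} \<noteq> {}" by blast
    show "0 \<le> (5 * Cg0) * real K * \<delta>" using Cg0_nn d0 by simp
    fix z v :: "nat \<Rightarrow> real"
    assume zu: "(\<Sum>q\<in>{..<m}. (z q)\<^sup>2) = 1" and vu: "(\<Sum>q\<in>{..<m}. (v q)\<^sup>2) = 1"
    have "F.br z v (\<lambda>r. w r - wstar r) \<le> 5 * \<delta>"
    proof (rule F.br_cnn[OF nvb zu vu])
      show "\<delta> = sqrt (\<Sum>p\<in>{..<m}. (w p - wstar p)\<^sup>2)" by (simp add: \<delta>_def)
      show "\<delta> \<le> 1" by (rule \<delta>1)
    qed simp
    then have "F.Cg * F.br z v (\<lambda>r. w r - wstar r) \<le> Cg0 * (5 * \<delta>)"
      unfolding CgE using Cg0_nn by (rule mult_left_mono)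
    also have "\<dots> \<le> Cg0 * (5 * \<delta>) * real K"
    proof -
      have "0 \<le> Cg0 * (5 * \<delta>)" using Cg0_nn d0 by simp
      moreover have "1 \<le> real K" using K1 by simp
      ultimately show ?thesis using mult_left_mono[of 1 "real K" "Cg0 * (5 * \<delta>)"] by simp
    qed
    finally show "F.Cg * F.br z v (\<lambda>r. w r - wstar r) \<le> (5 * Cg0) * real K * \<delta>" by (simp add: mult_ac)
  qed
  then show ?thesis unfolding risk \<delta>_def by simp
qed

theorem lemma1:
  shows "(\<exists>C1::real. \<forall>(d::nat) (K::nat) (Wstar::nat \<times> nat \<Rightarrow> real) (W::nat \<times> nat \<Rightarrow> real).
            d \<ge> 1 \<longrightarrow> K \<ge> 1 \<longrightarrow>
            (\<forall>k<K. sqrt (\<Sum>i<d. (Wstar (i, k))\<^sup>2) \<le> 1) \<longrightarrow>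
            sqrt (\<Sum>i<d. \<Sum>k<K. (W (i, k) - Wstar (i, k))\<^sup>2) \<le> 0.7 \<longrightarrow>
            spec_norm ({..<d} \<times> {..<K})
              (\<lambda>p q. hessian (fcn_risk d K Wstar) W p q - hessian (fcn_risk d K Wstar) Wstar p q)
            \<le> C1 / (real K powr (3/2)) * sqrt (\<Sum>i<d. \<Sum>k<K. (W (i, k) - Wstar (i, k))\<^sup>2))
       \<and> (\<exists>C2::real. \<forall>(m::nat) (K::nat) (wstar::nat \<Rightarrow> real) (w::nat \<Rightarrow> real).
            m \<ge> 1 \<longrightarrow> K \<ge> 1 \<longrightarrow>
            sqrt (\<Sum>j<m. (wstar j)\<^sup>2) \<le> 1 \<longrightarrow>
            sqrt (\<Sum>j<m. (w j - wstar j)\<^sup>2) \<le> 0.7 \<longrightarrow>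
            spec_norm {..<m}
              (\<lambda>p q. hessian (cnn_risk m K wstar) w p q - hessian (cnn_risk m K wstar) wstar p q)
            \<le> C2 * real K * sqrt (\<Sum>j<m. (w j - wstar j)\<^sup>2))"
proof (rule conjI)
  show "\<exists>C1::real. \<forall>(d::nat) (K::nat) (Wstar::nat \<times> nat \<Rightarrow> real) (W::nat \<times> nat \<Rightarrow> real).
            d \<ge> 1 \<longrightarrow> K \<ge> 1 \<longrightarrow>
            (\<forall>k<K. sqrt (\<Sum>i<d. (Wstar (i, k))\<^sup>2) \<le> 1) \<longrightarrow>
            sqrt (\<Sum>i<d. \<Sum>k<K. (W (i, k) - Wstar (i, k))\<^sup>2) \<le> 0.7 \<longrightarrow>
            spec_norm ({..<d} \<times> {..<K})
              (\<lambda>p q. hessian (fcn_risk d K Wstar) W p q - hessian (fcn_risk d K Wstar) Wstar p q)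
            \<le> C1 / (real K powr (3/2)) * sqrt (\<Sum>i<d. \<Sum>k<K. (W (i, k) - Wstar (i, k))\<^sup>2)"
    apply (intro exI[of _ "5 * Cg0"] allI impI)
    apply (rule fcn_main)
       apply assumption+
    done
  show "\<exists>C2::real. \<forall>(m::nat) (K::nat) (wstar::nat \<Rightarrow> real) (w::nat \<Rightarrow> real).
            m \<ge> 1 \<longrightarrow> K \<ge> 1 \<longrightarrow>
            sqrt (\<Sum>j<m. (wstar j)\<^sup>2) \<le> 1 \<longrightarrow>
            sqrt (\<Sum>j<m. (w j - wstar j)\<^sup>2) \<le> 0.7 \<longrightarrow>
            spec_norm {..<m}
              (\<lambda>p q. hessian (cnn_risk m K wstar) w p q - hessian (cnn_risk m K wstar) wstar p q)
            \<le> C2 * real K * sqrt (\<Sum>j<m. (w j - wstar j)\<^sup>2)"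
    apply (intro exI[of _ "5 * Cg0"] allI impI)
    apply (rule cnn_main)
       apply assumption+
    done
qed

end
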